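(* There is an absolute constant $C>0$ such that for all $k\ge 2$, $\gamma\in(0,1]$, $\varepsilon\in(0,1]$ and $n\ge C\,k^3/(\gamma^2\varepsilon^4)$, there exists a symmetric private-coin $\varepsilon$-LDP protocol with $n$ users, each holding an i.i.d. sample from an unknown $p\in\Delta([k]\times[k])$, whose curator outputs ``independent'' with probability at least $2/3$ if $p$ is a product distribution and ``not independent'' with probability at least $2/3$ if $p$ is $\gamma$-far from every product distribution.
   Context: $\Delta(\Omega)$ is the set of probability distributions on a finite set $\Omega$; $d_{TV}(p,q)=\frac12\|p-q\|_1$. A distribution on $[k]\times[k]$ is a product distribution if it equals $p_1\otimes p_2$, $(p_1\otimes p_2)(x_1,x_2)=p_1(x_1)p_2(x_2)$, for some $p_1,p_2\in\Delta([k])$; $p$ is $\gamma$-far from product if $d_{TV}(p,q)>\gamma$ for every product distribution $q$. Protocol model: user $j$ holds $X_j$, $X_1,\dots,X_n$ i.i.d. from $p$; each user sends $Z_j\sim W(\cdot\mid X_j)$ for a channel $W$ into a finite set, independently across users (private-coin, symmetric: the same $W$ for all users), and the curator outputs a possibly randomized function of $(Z_1,\dots,Z_n)$. $\varepsilon$-LDP means $W(z\mid x)\le e^\varepsilon W(z\mid x')$ for all $z,x,x'$. *)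

theory Defs
  imports Complex_Main
begin

text \<open>The alphabet [k] is rendered as {0..<k}. A probability distribution on a finite
set A is a real function, nonnegative on A and summing to 1 over A (values off A irrelevant).\<close>

definition is_dist :: "'a set \<Rightarrow> ('a \<Rightarrow> real) \<Rightarrow> bool" where
  "is_dist A p \<longleftrightarrow> (\<forall>x\<in>A. 0 \<le> p x) \<and> (\<Sum>x\<in>A. p x) = 1"

abbreviation sq :: "nat \<Rightarrow> (nat \<times> nat) set" where
  "sq k \<equiv> {0..<k} \<times> {0..<k}"

definition dtv :: "'a set \<Rightarrow> ('a \<Rightarrow> real) \<Rightarrow> ('a \<Rightarrow> real) \<Rightarrow> real" where
  "dtv A p q = (1/2) * (\<Sum>x\<in>A. \<bar>p x - q x\<bar>)"

definition is_product :: "nat \<Rightarrow> (nat \<times> nat \<Rightarrow> real) \<Rightarrow> bool" where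
  "is_product k p \<longleftrightarrow> (\<exists>p1 p2. is_dist {0..<k} p1 \<and> is_dist {0..<k} p2 \<and>
      (\<forall>x1\<in>{0..<k}. \<forall>x2\<in>{0..<k}. p (x1, x2) = p1 x1 * p2 x2))"

definition far_from_product :: "nat \<Rightarrow> real \<Rightarrow> (nat \<times> nat \<Rightarrow> real) \<Rightarrow> bool" where
  "far_from_product k \<gamma> p \<longleftrightarrow>
     (\<forall>q. is_dist (sq k) q \<and> is_product k q \<longrightarrow> dtv (sq k) p q > \<gamma>)"

definition is_channel :: "'x set \<Rightarrow> 'z set \<Rightarrow> ('x \<Rightarrow> 'z \<Rightarrow> real) \<Rightarrow> bool" where
  "is_channel X Z W \<longleftrightarrow> finite Z \<and> (\<forall>x\<in>X. is_dist Z (W x))"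

definition is_LDP :: "real \<Rightarrow> 'x set \<Rightarrow> 'z set \<Rightarrow> ('x \<Rightarrow> 'z \<Rightarrow> real) \<Rightarrow> bool" where
  "is_LDP \<epsilon> X Z W \<longleftrightarrow> (\<forall>z\<in>Z. \<forall>x\<in>X. \<forall>x'\<in>X. W x z \<le> exp \<epsilon> * W x' z)"

definition tuples :: "nat \<Rightarrow> 'a set \<Rightarrow> 'a list set" where
  "tuples n A = {xs. length xs = n \<and> set xs \<subseteq> A}"

text \<open>Probability that the curator outputs ``independent'' when n users hold i.i.d.
  samples X_1..X_n from p, each user j independently (private coins) sends Z_j drawn from
  W(.|X_j) (the same W for every user), and the curator, seeing (Z_1,...,Z_n), outputs
  ``independent'' with probability f(Z_1,...,Z_n) (a randomized curator).\<close>
definition accept_prob ::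
  "nat \<Rightarrow> 'x set \<Rightarrow> 'z set \<Rightarrow> ('x \<Rightarrow> real) \<Rightarrow> ('x \<Rightarrow> 'z \<Rightarrow> real) \<Rightarrow> ('z list \<Rightarrow> real) \<Rightarrow> real" where
  "accept_prob n X Z p W f =
     (\<Sum>xs\<in>tuples n X. \<Sum>zs\<in>tuples n Z.
        (\<Prod>j<n. p (xs ! j) * W (xs ! j) (zs ! j)) * f zs)"

end

theory Submission
  imports Defs "HOL-Library.Countable"
begin


lemma finite_tuples[simp]: "finite A \<Longrightarrow> finite (tuples n A)"
  unfolding tuples_def using finite_lists_length_eq[of A n] by (simp add: conj_commute)

lemma tuples_0[simp]: "tuples 0 A = {[]}"
  by (auto simp: tuples_def)

lemma tuples_Suc: "tuples (Suc n) A = (\<lambda>(a,xs). a#xs) ` (A \<times> tuples n A)"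
proof -
  have "xs \<in> (\<lambda>(a,xs). a#xs) ` (A \<times> tuples n A)" if "xs \<in> tuples (Suc n) A" for xs
    using that by (cases xs) (auto simp: tuples_def)
  then show ?thesis by (auto simp: tuples_def)
qed

lemma sum_tuples_Suc:
  assumes "finite A"
  shows "(\<Sum>xs\<in>tuples (Suc n) A. G xs) = (\<Sum>a\<in>A. \<Sum>xs\<in>tuples n A. G (a#xs))"
proof -
  have inj: "inj_on (\<lambda>(a,xs). a#xs) (A \<times> tuples n A)"
    by (auto simp: inj_on_def)
  have "(\<Sum>xs\<in>tuples (Suc n) A. G xs) = (\<Sum>y\<in>A \<times> tuples n A. G ((\<lambda>(a,xs). a#xs) y))"
    unfolding tuples_Suc by (rule sum.reindex[OF inj, unfolded comp_def])
  also have "\<dots> = (\<Sum>a\<in>A. \<Sum>xs\<in>tuples n A. G (a#xs))"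
    by (simp add: sum.cartesian_product split_def)
  finally show ?thesis .
qed

lemma sum_prod_tuples:
  assumes "finite A"
  shows "(\<Sum>xs\<in>tuples n A. \<Prod>j<n. h j (xs!j)) = (\<Prod>j<n. \<Sum>a\<in>A. (h j a :: real))"
  using assms
proof (induction n arbitrary: h)
  case 0
  then show ?case by simp
next
  case (Suc n)
  have "(\<Sum>xs\<in>tuples (Suc n) A. \<Prod>j<Suc n. h j (xs!j))
      = (\<Sum>a\<in>A. \<Sum>xs\<in>tuples n A. h 0 a * (\<Prod>j<n. h (Suc j) (xs!j)))"
    by (simp add: sum_tuples_Suc[OF Suc.prems] prod.lessThan_Suc_shift del: prod.lessThan_Suc)
  also have "\<dots> = (\<Sum>a\<in>A. h 0 a * (\<Sum>xs\<in>tuples n A. (\<Prod>j<n. h (Suc j) (xs!j))))"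
    by (simp add: sum_distrib_left)
  also have "\<dots> = (\<Sum>a\<in>A. h 0 a * (\<Prod>j<n. \<Sum>a\<in>A. h (Suc j) a))"
    using Suc.IH[OF Suc.prems, of "\<lambda>j. h (Suc j)"] by simp
  also have "\<dots> = (\<Prod>j<Suc n. \<Sum>a\<in>A. h j a)"
    by (simp add: prod.lessThan_Suc_shift sum_distrib_right del: prod.lessThan_Suc)
  finally show ?case .
qed

lemma sum_prod_tuples_J:
  assumes "finite A" and q1: "\<And>j. j < n \<Longrightarrow> (\<Sum>a\<in>A. q j a) = 1" and J: "J \<subseteq> {..<n}"
  shows "(\<Sum>xs\<in>tuples n A. (\<Prod>j<n. q j (xs!j)) * (\<Prod>j\<in>J. g j (xs!j)))
       = (\<Prod>j\<in>J. \<Sum>a\<in>A. q j a * (g j a :: real))"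
proof -
  have fJ: "finite J" using J finite_subset by blast
  have JJ: "{..<n} \<inter> J = J" using J by auto
  have "(\<Prod>j\<in>J. g j (xs!j)) = (\<Prod>j<n. if j \<in> J then g j (xs!j) else 1)" for xs
    by (subst prod.inter_restrict[symmetric]) (simp_all add: JJ)
  hence "(\<Sum>xs\<in>tuples n A. (\<Prod>j<n. q j (xs!j)) * (\<Prod>j\<in>J. g j (xs!j)))
      = (\<Sum>xs\<in>tuples n A. \<Prod>j<n. q j (xs!j) * (if j \<in> J then g j (xs!j) else 1))"
    by (simp add: prod.distrib)
  also have "\<dots> = (\<Prod>j<n. \<Sum>a\<in>A. q j a * (if j \<in> J then g j a else 1))"
    by (rule sum_prod_tuples[OF assms(1)])
  also have "\<dots> = (\<Prod>j<n. if j \<in> J then (\<Sum>a\<in>A. q j a * g j a) else 1)"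
    by (rule prod.cong) (auto simp: q1)
  also have "\<dots> = (\<Prod>j\<in>J. \<Sum>a\<in>A. q j a * g j a)"
    by (subst prod.inter_restrict[symmetric]) (simp_all add: JJ)
  finally show ?thesis .
qed

lemma sum_prod_tuples_1:
  assumes "finite A" and q1: "\<And>j. j < n \<Longrightarrow> (\<Sum>a\<in>A. q j a) = 1"
  shows "(\<Sum>xs\<in>tuples n A. (\<Prod>j<n. (q j (xs!j)::real))) = 1"
  using sum_prod_tuples_J[OF assms, where J="{}" and g="\<lambda>_ _. 1"] by simp

definition grp :: "nat \<Rightarrow> 'a list \<Rightarrow> ('a \<times> 'a \<times> 'a) list" where
  "grp m zs = map (\<lambda>g. (zs!(3*g), zs!(3*g+1), zs!(3*g+2))) [0..<m]"

lemma grp_0[simp]: "grp 0 zs = []" by (simp add: grp_def)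

lemma grp_Suc: "grp (Suc m) (a#b#c#zs) = (a,b,c) # grp m zs"
proof -
  have "[0..<Suc m] = 0 # map Suc [0..<m]"
    by (simp add: upt_conv_Cons map_Suc_upt del: upt_Suc)
  then show ?thesis by (simp add: grp_def numeral_3_eq_3)
qed

lemma grp_tuples: "zs \<in> tuples n Z \<Longrightarrow> 3*m \<le> n \<Longrightarrow> grp m zs \<in> tuples m (Z\<times>Z\<times>Z)"
proof -
  assume a: "zs \<in> tuples n Z" "3*m \<le> n"
  have "zs ! i \<in> Z" if "i < n" for i
    using a(1) that nth_mem[of i zs] by (auto simp: tuples_def)
  then show ?thesis using a(2) unfolding grp_def tuples_def by auto
qed

lemma sum_grp:
  assumes fZ: "finite Z" and mu1: "(\<Sum>z\<in>Z. mu z) = 1" and mn: "3*m \<le> n"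
  shows "(\<Sum>zs\<in>tuples n Z. (\<Prod>j<n. mu (zs!j)) * F (grp m zs))
       = (\<Sum>ws\<in>tuples m (Z\<times>Z\<times>Z). (\<Prod>g<m. (\<lambda>(a,b,c). mu a * mu b * mu c) (ws!g)) * (F ws :: real))"
  using mn
proof (induction m arbitrary: n F)
  case 0
  have "(\<Sum>zs\<in>tuples n Z. (\<Prod>j<n. mu (zs!j))) = 1"
    by (rule sum_prod_tuples_1[OF fZ mu1])
  then show ?case by (simp add: sum_distrib_right[symmetric])
next
  case (Suc m)
  define n' where "n' = n - 3"
  have n: "n = Suc (Suc (Suc n'))" and mn': "3*m \<le> n'"
    using Suc.prems by (auto simp: n'_def)
  let ?nu = "\<lambda>(a,b,c). mu a * mu b * mu c"
  have wt: "(\<Prod>j<Suc (Suc (Suc n')). mu ((a#b#c#zs)!j)) = mu a * (mu b * (mu c * (\<Prod>j<n'. mu (zs!j))))"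
    for a b c zs by (simp add: prod.lessThan_Suc_shift del: prod.lessThan_Suc)
  have "(\<Sum>zs\<in>tuples n Z. (\<Prod>j<n. mu (zs!j)) * F (grp (Suc m) zs))
     = (\<Sum>a\<in>Z. \<Sum>b\<in>Z. \<Sum>c\<in>Z. \<Sum>zs\<in>tuples n' Z.
          (\<Prod>j<Suc (Suc (Suc n')). mu ((a#b#c#zs)!j)) * F (grp (Suc m) (a#b#c#zs)))"
    unfolding n by (simp only: sum_tuples_Suc[OF fZ])
  also have "\<dots> = (\<Sum>a\<in>Z. \<Sum>b\<in>Z. \<Sum>c\<in>Z. (mu a * mu b * mu c) * (\<Sum>zs\<in>tuples n' Z.
          (\<Prod>j<n'. mu (zs!j)) * F ((a,b,c) # grp m zs)))"
    by (simp only: wt grp_Suc sum_distrib_left mult.assoc)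
  also have "\<dots> = (\<Sum>a\<in>Z. \<Sum>b\<in>Z. \<Sum>c\<in>Z. (mu a * mu b * mu c) *
          (\<Sum>ws\<in>tuples m (Z\<times>Z\<times>Z). (\<Prod>g<m. ?nu (ws!g)) * F ((a,b,c) # ws)))"
    using Suc.IH[OF mn', of "\<lambda>ws. F ((_,_,_) # ws)"] by simp
  also have "\<dots> = (\<Sum>w\<in>Z\<times>Z\<times>Z. ?nu w * (\<Sum>ws\<in>tuples m (Z\<times>Z\<times>Z). (\<Prod>g<m. ?nu (ws!g)) * F (w # ws)))"
    by (simp only: sum.cartesian_product' case_prod_conv)
  also have "\<dots> = (\<Sum>ws\<in>tuples (Suc m) (Z\<times>Z\<times>Z). (\<Prod>g<Suc m. ?nu (ws!g)) * F ws)"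
    by (simp only: sum_tuples_Suc[of "Z\<times>Z\<times>Z"] fZ finite_cartesian_product prod.lessThan_Suc_shift
          sum_distrib_left mult.assoc nth_Cons_0 nth_Cons_Suc)
  finally show ?case .
qed



locale iid =
  fixes Om :: "'w set" and nu :: "'w \<Rightarrow> real" and m :: nat
  assumes finOm: "finite Om" and nu1: "(\<Sum>w\<in>Om. nu w) = 1" and nu0: "\<And>w. w \<in> Om \<Longrightarrow> nu w \<ge> 0"
begin

definition EE :: "('w list \<Rightarrow> real) \<Rightarrow> real" where
  "EE G = (\<Sum>ws\<in>tuples m Om. (\<Prod>g<m. nu (ws!g)) * G ws)"

definition E1 :: "('w \<Rightarrow> real) \<Rightarrow> real" where
  "E1 h = (\<Sum>w\<in>Om. nu w * h w)"

lemma EE_J: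
  assumes "J \<subseteq> {..<m}"
  shows "EE (\<lambda>ws. \<Prod>j\<in>J. a j (ws!j)) = (\<Prod>j\<in>J. E1 (a j))"
  unfolding EE_def E1_def
  by (rule sum_prod_tuples_J[OF finOm _ assms, of "\<lambda>_. nu"]) (simp add: nu1)

lemma EE_const: "EE (\<lambda>_. c) = c"
  using EE_J[of "{}"] unfolding EE_def by (simp add: sum_distrib_right[symmetric])

lemma EE_1: "g < m \<Longrightarrow> EE (\<lambda>ws. a (ws!g)) = E1 a"
  using EE_J[of "{g}" "\<lambda>_. a"] by simp

lemma EE_2: "g < m \<Longrightarrow> h < m \<Longrightarrow> g \<noteq> h \<Longrightarrow>
    EE (\<lambda>ws. a (ws!g) * b (ws!h)) = E1 a * E1 b"
  using EE_J[of "{g,h}" "\<lambda>j. if j = g then a else b"] by simp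

lemma EE_3: "g < m \<Longrightarrow> h < m \<Longrightarrow> l < m \<Longrightarrow> g \<noteq> h \<Longrightarrow> g \<noteq> l \<Longrightarrow> h \<noteq> l \<Longrightarrow>
    EE (\<lambda>ws. a (ws!g) * b (ws!h) * c (ws!l)) = E1 a * E1 b * E1 c"
  using EE_J[of "{g,h,l}" "\<lambda>j. if j = g then a else if j = h then b else c"] by (simp add: mult.assoc)

lemma EE_4: "g < m \<Longrightarrow> h < m \<Longrightarrow> l < m \<Longrightarrow> r < m \<Longrightarrow> g \<noteq> h \<Longrightarrow> g \<noteq> l \<Longrightarrow> h \<noteq> l \<Longrightarrow>
    g \<noteq> r \<Longrightarrow> h \<noteq> r \<Longrightarrow> l \<noteq> r \<Longrightarrow>
    EE (\<lambda>ws. a (ws!g) * b (ws!h) * c (ws!l) * d (ws!r)) = E1 a * E1 b * E1 c * E1 d"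
  using EE_J[of "{g,h,l,r}" "\<lambda>j. if j = g then a else if j = h then b else if j = l then c else d"]
  by (simp add: mult.assoc)

lemma EE_sum: "finite S \<Longrightarrow> EE (\<lambda>ws. \<Sum>c\<in>S. G c ws) = (\<Sum>c\<in>S. EE (G c))"
  unfolding EE_def by (simp add: sum_distrib_left sum.swap[of _ S])

lemma EE_cmult: "EE (\<lambda>ws. r * G ws) = r * EE G"
  unfolding EE_def by (simp add: sum_distrib_left mult_ac)

lemma EE_add: "EE (\<lambda>ws. G ws + H ws) = EE G + EE H"
  unfolding EE_def by (simp add: distrib_left sum.distrib)

lemma EE_diff: "EE (\<lambda>ws. G ws - H ws) = EE G - EE H"
  unfolding EE_def by (simp add: right_diff_distrib sum_subtractf)

lemma weight_nonneg: "ws \<in> tuples m Om \<Longrightarrow> (\<Prod>g<m. nu (ws!g)) \<ge> 0"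
  by (rule prod_nonneg) (auto simp: tuples_def intro!: nu0)

lemma EE_mono: "(\<And>ws. ws \<in> tuples m Om \<Longrightarrow> G ws \<le> H ws) \<Longrightarrow> EE G \<le> EE H"
  unfolding EE_def by (intro sum_mono mult_left_mono) (auto simp: weight_nonneg)

lemma chebyshev:
  assumes s: "s > 0" and P: "\<And>ws. P ws \<Longrightarrow> \<bar>T ws - t\<bar> \<ge> s"
  shows "EE (\<lambda>ws. if P ws then 1 else 0) \<le> EE (\<lambda>ws. (T ws - t)^2) / s^2"
proof -
  have "EE (\<lambda>ws. if P ws then 1 else 0) \<le> EE (\<lambda>ws. (T ws - t)^2 / s^2)"
  proof (rule EE_mono)
    fix ws
    show "(if P ws then 1 else 0) \<le> (T ws - t)^2 / s^2"
    proof (cases "P ws")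
      case True
      hence "s^2 \<le> \<bar>T ws - t\<bar>^2" using P[OF True] s
        by (intro power_mono) auto
      hence "s^2 \<le> (T ws - t)^2" by simp
      then show ?thesis using True s by simp
    qed simp
  qed
  also have "\<dots> = EE (\<lambda>ws. (T ws - t)^2) / s^2"
    using EE_cmult[of "1/s^2" "\<lambda>ws. (T ws - t)^2"] by (simp add: field_simps)
  finally show ?thesis .
qed

end



lemma sum_if_neq: "finite A \<Longrightarrow> g \<in> A \<Longrightarrow> (\<Sum>h\<in>A. if g = h then 0 else f h) = (\<Sum>h\<in>A-{g}. f h)"
proof -
  assume a: "finite A" "g \<in> A"
  have "(\<Sum>h\<in>A. if g = h then 0 else f h) = (if g = g then 0 else f g) + (\<Sum>h\<in>A-{g}. if g = h then 0 else f h)"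
    by (rule sum.remove[OF a])
  also have "\<dots> = (\<Sum>h\<in>A-{g}. f h)"
    by (simp, intro sum.cong) auto
  finally show ?thesis .
qed

locale ustat = iid Om nu m for Om :: "'w set" and nu m +
  fixes V :: "'w \<Rightarrow> 'c \<Rightarrow> real" and I :: "'c set"
  assumes finI: "finite I"
begin

definition K where "K w w' = (\<Sum>c\<in>I. V w c * V w' c)"
definition T where "T ws = (\<Sum>g<m. \<Sum>h<m. if g = h then 0 else K (ws!g) (ws!h))"
definition v where "v c = E1 (\<lambda>w. V w c)"
definition M where "M c c' = E1 (\<lambda>w. V w c * V w c')"
definition D where "D = (\<Sum>c\<in>I. (v c)^2)"
definition Bq where "Bq = (\<Sum>c\<in>I. \<Sum>c'\<in>I. M c c' * v c * v c')"
definition Aq where "Aq = (\<Sum>c\<in>I. \<Sum>c'\<in>I. (M c c')^2)"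

lemma EE_if: "EE (\<lambda>ws. if b then 0 else X ws) = (if b then 0 else EE X)"
  by (cases b) (simp_all add: EE_const)

lemma EE_K: "g < m \<Longrightarrow> h < m \<Longrightarrow> g \<noteq> h \<Longrightarrow> EE (\<lambda>ws. K (ws!g) (ws!h)) = D"
proof -
  assume a: "g < m" "h < m" "g \<noteq> h"
  have "EE (\<lambda>ws. V (ws!g) c * V (ws!h) c) = (v c)^2" for c
    using EE_2[OF a, of "\<lambda>w. V w c" "\<lambda>w. V w c"] by (simp add: v_def power2_eq_square)
  then show ?thesis unfolding K_def D_def by (simp add: EE_sum[OF finI])
qed

lemma ET: "EE T = real m * (real m - 1) * D"
proof -
  have "EE T = (\<Sum>g<m. \<Sum>h<m. if g = h then 0 else EE (\<lambda>ws. K (ws!g) (ws!h)))"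
    unfolding T_def by (simp only: EE_sum finite_lessThan EE_if)
  also have "\<dots> = (\<Sum>g<m. \<Sum>h<m. if g = h then 0 else D)"
    by (intro sum.cong refl) (auto simp: EE_K)
  also have "\<dots> = (\<Sum>g<m. (real m - 1) * D)"
    by (intro sum.cong refl) (simp add: sum_if_neq)
  finally show ?thesis by simp
qed


lemma E1_sum: "finite S \<Longrightarrow> E1 (\<lambda>w. \<Sum>c\<in>S. G c w) = (\<Sum>c\<in>S. E1 (G c))"
  unfolding E1_def by (simp add: sum_distrib_left sum.swap[of _ S])

lemma E1_cmult: "E1 (\<lambda>w. r * G w) = r * E1 G"
  unfolding E1_def by (simp add: sum_distrib_left mult_ac)

lemma E1_nonneg: "(\<And>w. w \<in> Om \<Longrightarrow> G w \<ge> 0) \<Longrightarrow> E1 G \<ge> 0"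
  unfolding E1_def by (intro sum_nonneg mult_nonneg_nonneg) (auto simp: nu0)

lemma QF: "E1 (\<lambda>w. (\<Sum>c\<in>I. V w c * u c)^2) = (\<Sum>c\<in>I. \<Sum>c'\<in>I. M c c' * u c * u c')"
proof -
  have "(\<Sum>c\<in>I. V w c * u c)^2 = (\<Sum>c\<in>I. \<Sum>c'\<in>I. (u c * u c') * (V w c * V w c'))" for w
    unfolding power2_eq_square sum_product by (intro sum.cong refl) (simp add: mult_ac)
  then show ?thesis
    by (simp add: E1_sum[OF finI] E1_cmult M_def mult_ac)
qed

lemma QF_nonneg: "(\<Sum>c\<in>I. \<Sum>c'\<in>I. M c c' * u c * u c') \<ge> 0"
  unfolding QF[symmetric] by (rule E1_nonneg) simp

lemma Bq_nonneg: "Bq \<ge> 0" unfolding Bq_def by (rule QF_nonneg)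
lemma Aq_nonneg: "Aq \<ge> 0" unfolding Aq_def by (intro sum_nonneg) simp
lemma D_nonneg: "D \<ge> 0" unfolding D_def by (intro sum_nonneg) simp

lemma EEp4: "i < m \<Longrightarrow> j < m \<Longrightarrow> l < m \<Longrightarrow> r < m \<Longrightarrow> i \<noteq> j \<Longrightarrow> i \<noteq> l \<Longrightarrow> j \<noteq> l \<Longrightarrow>
    i \<noteq> r \<Longrightarrow> j \<noteq> r \<Longrightarrow> l \<noteq> r \<Longrightarrow>
   (\<Sum>c\<in>I. \<Sum>c'\<in>I. EE (\<lambda>ws. V (ws!i) c * V (ws!j) c * V (ws!l) c' * V (ws!r) c')) = D^2"
proof -
  assume a: "i < m" "j < m" "l < m" "r < m" "i \<noteq> j" "i \<noteq> l" "j \<noteq> l" "i \<noteq> r" "j \<noteq> r" "l \<noteq> r"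
  have "EE (\<lambda>ws. V (ws!i) c * V (ws!j) c * V (ws!l) c' * V (ws!r) c') = (v c)^2 * (v c')^2" for c c'
    using EE_4[OF a, of "\<lambda>w. V w c" "\<lambda>w. V w c" "\<lambda>w. V w c'" "\<lambda>w. V w c'"]
    by (simp add: v_def power2_eq_square)
  then show ?thesis by (simp add: D_def power2_eq_square[of "sum _ _"] sum_product)
qed

lemma EEp3: "i < m \<Longrightarrow> j < m \<Longrightarrow> l < m \<Longrightarrow> i \<noteq> j \<Longrightarrow> i \<noteq> l \<Longrightarrow> j \<noteq> l \<Longrightarrow>
   (\<Sum>c\<in>I. \<Sum>c'\<in>I. EE (\<lambda>ws. (V (ws!i) c * V (ws!i) c') * V (ws!j) c * V (ws!l) c')) = Bq"
proof -
  assume a: "i < m" "j < m" "l < m" "i \<noteq> j" "i \<noteq> l" "j \<noteq> l"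
  have "EE (\<lambda>ws. (V (ws!i) c * V (ws!i) c') * V (ws!j) c * V (ws!l) c') = M c c' * v c * v c'" for c c'
    using EE_3[OF a, of "\<lambda>w. V w c * V w c'" "\<lambda>w. V w c" "\<lambda>w. V w c'"]
    by (simp add: v_def M_def)
  then show ?thesis by (simp add: Bq_def)
qed

lemma EEp2: "i < m \<Longrightarrow> j < m \<Longrightarrow> i \<noteq> j \<Longrightarrow>
   (\<Sum>c\<in>I. \<Sum>c'\<in>I. EE (\<lambda>ws. (V (ws!i) c * V (ws!i) c') * (V (ws!j) c * V (ws!j) c'))) = Aq"
proof -
  assume a: "i < m" "j < m" "i \<noteq> j"
  have "EE (\<lambda>ws. (V (ws!i) c * V (ws!i) c') * (V (ws!j) c * V (ws!j) c')) = (M c c')^2" for c c'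
    using EE_2[OF a, of "\<lambda>w. V w c * V w c'" "\<lambda>w. V w c * V w c'"]
    by (simp add: M_def power2_eq_square)
  then show ?thesis by (simp add: Aq_def)
qed

lemma EE_KK: "EE (\<lambda>ws. K (ws!g) (ws!h) * K (ws!g') (ws!h')) =
   (\<Sum>c\<in>I. \<Sum>c'\<in>I. EE (\<lambda>ws. V (ws!g) c * V (ws!h) c * V (ws!g') c' * V (ws!h') c'))"
  unfolding K_def sum_product by (simp add: EE_sum[OF finI] mult.assoc)

definition ind :: "bool \<Rightarrow> real" where "ind b = (if b then 1 else 0)"

lemma term_bound:
  assumes "g < m" "h < m" "g' < m" "h' < m" "g \<noteq> h" "g' \<noteq> h'"
  shows "EE (\<lambda>ws. K (ws!g) (ws!h) * K (ws!g') (ws!h')) \<le>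
     D^2 + Bq * (ind (g = g') + ind (g = h') + ind (h = g') + ind (h = h'))
         + Aq * (ind (g = g' \<and> h = h') + ind (g = h' \<and> h = g'))"
proof -
  note nn = Bq_nonneg Aq_nonneg D_nonneg
  have ind0: "0 \<le> ind b" for b by (simp add: ind_def)
  let ?R = "D^2 + Bq * (ind (g = g') + ind (g = h') + ind (h = g') + ind (h = h'))
         + Aq * (ind (g = g' \<and> h = h') + ind (g = h' \<and> h = g'))"
  have R1: "Bq \<le> ?R" if "ind (g = g') + ind (g = h') + ind (h = g') + ind (h = h') \<ge> 1"
  proof -
    have "Bq \<le> Bq * (ind (g = g') + ind (g = h') + ind (h = g') + ind (h = h'))"
      using that Bq_nonneg mult_left_mono[of 1 "ind (g = g') + ind (g = h') + ind (h = g') + ind (h = h')" Bq] by simp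
    moreover have "0 \<le> Aq * (ind (g = g' \<and> h = h') + ind (g = h' \<and> h = g'))"
      using Aq_nonneg ind0 by simp
    ultimately show ?thesis using nn by (smt (verit) zero_le_power2)
  qed
  have R2: "Aq \<le> ?R" if "ind (g = g' \<and> h = h') + ind (g = h' \<and> h = g') \<ge> 1"
  proof -
    have "Aq \<le> Aq * (ind (g = g' \<and> h = h') + ind (g = h' \<and> h = g'))"
      using that Aq_nonneg mult_left_mono[of 1 "ind (g = g' \<and> h = h') + ind (g = h' \<and> h = g')" Aq] by simp
    moreover have "0 \<le> Bq * (ind (g = g') + ind (g = h') + ind (h = g') + ind (h = h'))"
      using Bq_nonneg ind0 by simp
    ultimately show ?thesis using nn by (smt (verit) zero_le_power2)
  qed
  have R0: "D^2 \<le> ?R"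
  proof -
    have "0 \<le> Aq * (ind (g = g' \<and> h = h') + ind (g = h' \<and> h = g'))"
      using Aq_nonneg ind0 by simp
    moreover have "0 \<le> Bq * (ind (g = g') + ind (g = h') + ind (h = g') + ind (h = h'))"
      using Bq_nonneg ind0 by simp
    ultimately show ?thesis by linarith
  qed
  show ?thesis
  proof (cases "g' = g")
    case True
    show ?thesis
    proof (cases "h' = h")
      case True
      have "EE (\<lambda>ws. K (ws!g) (ws!h) * K (ws!g') (ws!h')) = Aq"
        unfolding EE_KK \<open>g' = g\<close> True using EEp2[of g h] assms
        by (simp add: mult_ac)
      then show ?thesis using R2 \<open>g' = g\<close> True by (simp add: ind_def)
    next
      case False
      have "EE (\<lambda>ws. K (ws!g) (ws!h) * K (ws!g') (ws!h')) = Bq"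
        unfolding EE_KK \<open>g' = g\<close> using EEp3[of g h h'] assms False \<open>g' = g\<close>
        by (simp add: mult_ac)
      then show ?thesis using R1 \<open>g' = g\<close> by (simp add: ind_def)
    qed
  next
    case gg: False
    show ?thesis
    proof (cases "g' = h")
      case True
      show ?thesis
      proof (cases "h' = g")
        case True
        have "EE (\<lambda>ws. K (ws!g) (ws!h) * K (ws!g') (ws!h')) = Aq"
          unfolding EE_KK \<open>g' = h\<close> True using EEp2[of g h] assms
          by (simp add: mult_ac)
        then show ?thesis using R2 \<open>g' = h\<close> True by (simp add: ind_def)
      next
        case False
        have "EE (\<lambda>ws. K (ws!g) (ws!h) * K (ws!g') (ws!h')) = Bq"
          unfolding EE_KK \<open>g' = h\<close> using EEp3[of h g h'] assms False \<open>g' = h\<close>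
          by (simp add: mult_ac)
        then show ?thesis using R1 \<open>g' = h\<close> by (simp add: ind_def)
      qed
    next
      case gh: False
      show ?thesis
      proof (cases "h' = g")
        case True
        have "EE (\<lambda>ws. K (ws!g) (ws!h) * K (ws!g') (ws!h')) = Bq"
          unfolding EE_KK True using EEp3[of g h g'] assms gg gh True
          by (simp add: mult_ac)
        then show ?thesis using R1 True by (simp add: ind_def)
      next
        case hg: False
        show ?thesis
        proof (cases "h' = h")
          case True
          have "EE (\<lambda>ws. K (ws!g) (ws!h) * K (ws!g') (ws!h')) = Bq"
            unfolding EE_KK True using EEp3[of h g g'] assms gg gh True
            by (simp add: mult_ac)
          then show ?thesis using R1 True by (simp add: ind_def)
        next
          case False
          have "EE (\<lambda>ws. K (ws!g) (ws!h) * K (ws!g') (ws!h')) = D^2"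
            unfolding EE_KK using EEp4[of g h g' h'] assms gg gh hg False
            by (simp add: mult_ac)
          then show ?thesis using R0 by simp
        qed
      qed
    qed
  qed
qed


lemma ind_sum1: "a < m \<Longrightarrow> (\<Sum>x<m. ind (a = x)) = 1"
  unfolding ind_def by (simp add: sum.delta)
lemma ind_sum1': "a < m \<Longrightarrow> (\<Sum>x<m. ind (x = a)) = 1"
  unfolding ind_def by (simp add: sum.delta')
lemma ind_sumc: "(\<Sum>x<m. (c::real)) = real m * c" by simp
lemma ind_sumcm: "(\<Sum>x<m. (c::real) * f x) = c * (\<Sum>x<m. f x)" by (simp add: sum_distrib_left)

lemma sum4_ind1: "(\<Sum>g<m. \<Sum>h<m. \<Sum>g'<m. \<Sum>h'<m. ind (g = g')) = real m ^ 3"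
proof -
  have "(\<Sum>g'<m. \<Sum>h'<m. ind (g = g')) = real m" if "g < m" for g
    using ind_sum1[OF that] by (simp only: ind_sumc mult.commute[of "real m"] sum_distrib_right[symmetric] mult_1)
  then have "(\<Sum>g<m. \<Sum>h<m. \<Sum>g'<m. \<Sum>h'<m. ind (g = g')) = (\<Sum>g<m. \<Sum>h<m. real m)"
    by (intro sum.cong refl) auto
  then show ?thesis by (simp add: power3_eq_cube)
qed

lemma sum4_ind2: "(\<Sum>g<m. \<Sum>h<m. \<Sum>g'<m. \<Sum>h'<m. ind (g = h')) = real m ^ 3"
proof -
  have "(\<Sum>g'<m. \<Sum>h'<m. ind (g = h')) = real m" if "g < m" for g
    using ind_sum1[OF that] by simp
  then have "(\<Sum>g<m. \<Sum>h<m. \<Sum>g'<m. \<Sum>h'<m. ind (g = h')) = (\<Sum>g<m. \<Sum>h<m. real m)"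
    by (intro sum.cong refl) auto
  then show ?thesis by (simp add: power3_eq_cube)
qed

lemma sum4_ind3: "(\<Sum>g<m. \<Sum>h<m. \<Sum>g'<m. \<Sum>h'<m. ind (h = g')) = real m ^ 3"
proof -
  have "(\<Sum>g'<m. \<Sum>h'<m. ind (h = g')) = real m" if "h < m" for h
    using ind_sum1[OF that] by (simp only: ind_sumc mult.commute[of "real m"] sum_distrib_right[symmetric] mult_1)
  then have "(\<Sum>g<m. \<Sum>h<m. \<Sum>g'<m. \<Sum>h'<m. ind (h = g')) = (\<Sum>g<m. \<Sum>h<m. real m)"
    by (intro sum.cong refl) auto
  then show ?thesis by (simp add: power3_eq_cube)
qed

lemma sum4_ind4: "(\<Sum>g<m. \<Sum>h<m. \<Sum>g'<m. \<Sum>h'<m. ind (h = h')) = real m ^ 3"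
proof -
  have "(\<Sum>g'<m. \<Sum>h'<m. ind (h = h')) = real m" if "h < m" for h
    using ind_sum1[OF that] by simp
  then have "(\<Sum>g<m. \<Sum>h<m. \<Sum>g'<m. \<Sum>h'<m. ind (h = h')) = (\<Sum>g<m. \<Sum>h<m. real m)"
    by (intro sum.cong refl) auto
  then show ?thesis by (simp add: power3_eq_cube)
qed

lemma sum4_ind5: "(\<Sum>g<m. \<Sum>h<m. \<Sum>g'<m. \<Sum>h'<m. ind (g = g' \<and> h = h')) = real m ^ 2"
proof -
  have "(\<Sum>g'<m. \<Sum>h'<m. ind (g = g' \<and> h = h')) = 1" if "g < m" "h < m" for g h
  proof -
    have "(\<Sum>h'<m. ind (g = g' \<and> h = h')) = ind (g = g')" for g'
      using ind_sum1[OF that(2)] by (cases "g = g'") (simp_all add: ind_def)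
    then show ?thesis using ind_sum1[OF that(1)] by simp
  qed
  then have "(\<Sum>g<m. \<Sum>h<m. \<Sum>g'<m. \<Sum>h'<m. ind (g = g' \<and> h = h')) = (\<Sum>g<m. \<Sum>h<m. 1)"
    by (intro sum.cong refl) auto
  then show ?thesis by (simp add: power2_eq_square)
qed

lemma sum4_ind6: "(\<Sum>g<m. \<Sum>h<m. \<Sum>g'<m. \<Sum>h'<m. ind (g = h' \<and> h = g')) = real m ^ 2"
proof -
  have "(\<Sum>g'<m. \<Sum>h'<m. ind (g = h' \<and> h = g')) = 1" if "g < m" "h < m" for g h
  proof -
    have "(\<Sum>h'<m. ind (g = h' \<and> h = g')) = ind (h = g')" for g'
      using ind_sum1[OF that(1)] by (cases "h = g'") (simp_all add: ind_def)
    then show ?thesis using ind_sum1[OF that(2)] by simp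
  qed
  then have "(\<Sum>g<m. \<Sum>h<m. \<Sum>g'<m. \<Sum>h'<m. ind (g = h' \<and> h = g')) = (\<Sum>g<m. \<Sum>h<m. 1)"
    by (intro sum.cong refl) auto
  then show ?thesis by (simp add: power2_eq_square)
qed

lemma if_mult0: "(if P then 0 else (x::real)) * (if Q then 0 else y) = (if P \<or> Q then 0 else x * y)"
  by simp

lemma sum_if_neq_c: "g < m \<Longrightarrow> (\<Sum>h<m. if g = h then 0 else (c::real)) = (real m - 1) * c"
  by (simp add: sum_if_neq)

lemma sum4_D: "(\<Sum>g<m. \<Sum>h<m. \<Sum>g'<m. \<Sum>h'<m. if g = h \<or> g' = h' then 0 else (c::real))
   = (real m * (real m - 1))^2 * c"
proof -
  have in1: "(\<Sum>g'<m. \<Sum>h'<m. if g = h \<or> g' = h' then 0 else c) = (if g = h then 0 else real m * (real m - 1) * c)" for g h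
    by (cases "g = h") (simp_all add: sum_if_neq_c)
  have "(\<Sum>g<m. \<Sum>h<m. if g = h then 0 else real m * (real m - 1) * c) = (\<Sum>g<m. (real m - 1) * (real m * (real m - 1) * c))"
    by (intro sum.cong refl) (simp add: sum_if_neq_c)
  then show ?thesis by (simp add: in1 power2_eq_square mult_ac)
qed

lemma T2_expand: "(T ws)^2 = (\<Sum>g<m. \<Sum>h<m. \<Sum>g'<m. \<Sum>h'<m.
     if g = h \<or> g' = h' then 0 else K (ws!g) (ws!h) * K (ws!g') (ws!h'))"
  unfolding T_def power2_eq_square
  unfolding sum_distrib_right
  unfolding sum_distrib_left
  unfolding if_mult0 ..

lemma ET2: "EE (\<lambda>ws. (T ws)^2) \<le> (real m * (real m - 1))^2 * D^2 + 4 * real m ^ 3 * Bq + 2 * real m ^ 2 * Aq"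
proof -
  let ?R = "\<lambda>g h g' h'. (if g = h \<or> g' = h' then 0 else D^2) + (Bq * ind (g = g') + Bq * ind (g = h') + Bq * ind (h = g') + Bq * ind (h = h')
         + Aq * ind (g = g' \<and> h = h') + Aq * ind (g = h' \<and> h = g'))"
  have "EE (\<lambda>ws. (T ws)^2) = (\<Sum>g<m. \<Sum>h<m. \<Sum>g'<m. \<Sum>h'<m.
     if g = h \<or> g' = h' then 0 else EE (\<lambda>ws. K (ws!g) (ws!h) * K (ws!g') (ws!h')))"
    unfolding T2_expand by (simp only: EE_sum finite_lessThan EE_if)
  also have "\<dots> \<le> (\<Sum>g<m. \<Sum>h<m. \<Sum>g'<m. \<Sum>h'<m. ?R g h g' h')"
  proof (intro sum_mono)
    fix g h g' h' assume a: "g \<in> {..<m}" "h \<in> {..<m}" "g' \<in> {..<m}" "h' \<in> {..<m}"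
    have i0: "0 \<le> ind b" for b by (simp add: ind_def)
    have nn: "0 \<le> Bq * ind (g = g') + Bq * ind (g = h') + Bq * ind (h = g') + Bq * ind (h = h')
         + Aq * ind (g = g' \<and> h = h') + Aq * ind (g = h' \<and> h = g')"
      using Bq_nonneg Aq_nonneg i0 by (simp add: add_nonneg_nonneg)
    show "(if g = h \<or> g' = h' then 0 else EE (\<lambda>ws. K (ws!g) (ws!h) * K (ws!g') (ws!h'))) \<le> ?R g h g' h'"
    proof (cases "g = h \<or> g' = h'")
      case True then show ?thesis using nn by simp
    next
      case False
      then show ?thesis using term_bound[of g h g' h'] a by (simp add: algebra_simps)
    qed
  qed
  also have "\<dots> = (real m * (real m - 1))^2 * D^2 + (Bq * real m ^ 3 + Bq * real m ^ 3 + Bq * real m ^ 3 + Bq * real m ^ 3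
      + Aq * real m ^ 2 + Aq * real m ^ 2)"
    by (simp only: sum.distrib sum4_D ind_sumcm sum4_ind1 sum4_ind2 sum4_ind3 sum4_ind4 sum4_ind5 sum4_ind6)
  finally show ?thesis by (simp add: mult_ac)
qed

lemma E1_mono: "(\<And>w. w \<in> Om \<Longrightarrow> G w \<le> H w) \<Longrightarrow> E1 G \<le> E1 H"
  unfolding E1_def by (intro sum_mono mult_left_mono) (auto simp: nu0)

lemma Bq_bound:
  assumes qb: "\<And>u. (\<Sum>c\<in>I. \<Sum>c'\<in>I. M c c' * u c * u c') \<le> \<beta> * (\<Sum>c\<in>I. (u c)^2)"
  shows "Bq \<le> \<beta> * D"
  unfolding Bq_def D_def by (rule qb)

lemma Aq_bound:
  assumes qb: "\<And>u. (\<Sum>c\<in>I. \<Sum>c'\<in>I. M c c' * u c * u c') \<le> \<beta> * (\<Sum>c\<in>I. (u c)^2)"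
    and b0: "\<beta> \<ge> 0"
  shows "Aq \<le> \<beta>^2 * real (card I)"
proof -
  have Mcc: "M c c \<le> \<beta>" if "c \<in> I" for c
  proof -
    have "(\<Sum>a\<in>I. \<Sum>b\<in>I. M a b * ind (a = c) * ind (b = c)) \<le> \<beta> * (\<Sum>a\<in>I. (ind (a = c))^2)"
      by (rule qb)
    moreover have "(\<Sum>a\<in>I. \<Sum>b\<in>I. M a b * ind (a = c) * ind (b = c)) = M c c"
      using that finI by (simp add: ind_def if_distrib[of "\<lambda>x. _ * x"] sum.delta' cong: if_cong)
    moreover have "(\<Sum>a\<in>I. (ind (a = c))^2) = 1"
      using that finI by (simp add: ind_def if_distrib[of "\<lambda>x. x^2"] sum.delta' cong: if_cong)
    ultimately show ?thesis by simp
  qed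
  have "Aq = (\<Sum>c\<in>I. \<Sum>c'\<in>I. M c c' * E1 (\<lambda>w. V w c * V w c'))"
    unfolding Aq_def by (simp add: M_def power2_eq_square)
  also have "\<dots> = E1 (\<lambda>w. \<Sum>c\<in>I. \<Sum>c'\<in>I. M c c' * V w c * V w c')"
    by (simp add: E1_sum[OF finI] E1_cmult[symmetric] mult.assoc)
  also have "\<dots> \<le> E1 (\<lambda>w. \<beta> * (\<Sum>c\<in>I. (V w c)^2))"
    by (rule E1_mono) (rule qb)
  also have "\<dots> = \<beta> * (\<Sum>c\<in>I. M c c)"
    by (simp add: E1_cmult E1_sum[OF finI] M_def power2_eq_square)
  also have "\<dots> \<le> \<beta> * (\<Sum>c\<in>I. \<beta>)"
    by (intro mult_left_mono sum_mono b0 Mcc)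
  finally show ?thesis by (simp add: power2_eq_square mult_ac)
qed

lemma EE_var: "EE (\<lambda>ws. (T ws - t)^2) = EE (\<lambda>ws. (T ws)^2) - 2 * t * EE T + t^2"
proof -
  have "(\<lambda>ws. (T ws - t)^2) = (\<lambda>ws. ((T ws)^2 + t^2) - 2 * t * T ws)"
    by (simp add: power2_eq_square algebra_simps)
  then show ?thesis by (simp add: EE_diff EE_add EE_cmult EE_const)
qed

definition acc where "acc \<theta> ws = (if T ws < real m * (real m - 1) * \<theta> then 1 else (0::real))"

lemma acc_prod:
  assumes D0: "D = 0" and qb: "\<And>u. (\<Sum>c\<in>I. \<Sum>c'\<in>I. M c c' * u c * u c') \<le> \<beta> * (\<Sum>c\<in>I. (u c)^2)"
    and b0: "\<beta> \<ge> 0" and m2: "m \<ge> 2" and th: "\<theta> > 0"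
  shows "1 - EE (acc \<theta>) \<le> 2 * \<beta>^2 * real (card I) / ((real m - 1)^2 * \<theta>^2)"
proof -
  let ?s = "real m * (real m - 1) * \<theta>"
  have mpos: "real m - 1 > 0" "real m > 0" using m2 by auto
  have s: "?s > 0" using mpos th by simp
  have "1 - EE (acc \<theta>) = EE (\<lambda>ws. if \<not> T ws < ?s then 1 else 0)"
  proof -
    have "(\<lambda>ws. if \<not> T ws < ?s then 1 else 0) = (\<lambda>ws. 1 - acc \<theta> ws)"
      by (auto simp: acc_def)
    then show ?thesis using EE_diff[of "\<lambda>_. 1" "acc \<theta>"] EE_const[of 1] by simp
  qed
  also have "\<dots> \<le> EE (\<lambda>ws. (T ws - 0)^2) / ?s^2"
    by (rule chebyshev[OF s]) auto
  also have "\<dots> \<le> (2 * real m ^ 2 * (\<beta>^2 * real (card I))) / ?s^2"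
  proof (rule divide_right_mono)
    have "EE (\<lambda>ws. (T ws - 0)^2) \<le> 2 * real m ^ 2 * Aq"
      using ET2 D0 Bq_bound[OF qb] b0 Bq_nonneg by simp
    also have "\<dots> \<le> 2 * real m ^ 2 * (\<beta>^2 * real (card I))"
      by (intro mult_left_mono Aq_bound[OF qb b0]) auto
    finally show "EE (\<lambda>ws. (T ws - 0)^2) \<le> 2 * real m ^ 2 * (\<beta>^2 * real (card I))" .
  qed simp
  also have "\<dots> = 2 * \<beta>^2 * real (card I) / ((real m - 1)^2 * \<theta>^2)"
  proof -
    have e: "?s^2 = real m ^ 2 * ((real m - 1)^2 * \<theta>^2)" by (simp add: power_mult_distrib)
    have "(2 * real m ^ 2 * Y) / (real m ^ 2 * X) = 2 * Y / X" for X Y :: real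
      using mpos by simp
    from this[of "\<beta>^2 * real (card I)" "(real m - 1)^2 * \<theta>^2"] show ?thesis unfolding e by (simp add: mult_ac)
  qed
  finally show ?thesis .
qed

lemma acc_far:
  assumes D2: "D \<ge> 2 * \<theta>" and qb: "\<And>u. (\<Sum>c\<in>I. \<Sum>c'\<in>I. M c c' * u c * u c') \<le> \<beta> * (\<Sum>c\<in>I. (u c)^2)"
    and b0: "\<beta> \<ge> 0" and m2: "m \<ge> 2" and th: "\<theta> > 0"
  shows "EE (acc \<theta>) \<le> 16 * \<beta> * real m / ((real m - 1)^2 * D) + 8 * \<beta>^2 * real (card I) / ((real m - 1)^2 * D^2)"
proof -
  let ?t = "real m * (real m - 1) * D"
  let ?s = "real m * (real m - 1) * (D - \<theta>)"
  have mpos: "real m - 1 > 0" "real m > 0" using m2 by auto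
  have Dpos: "D > 0" using D2 th by simp
  have s: "?s > 0" using mpos th D2 by simp
  have sge: "?s \<ge> real m * (real m - 1) * D / 2"
  proof -
    have "D / 2 \<le> D - \<theta>" using D2 by simp
    hence "real m * (real m - 1) * (D / 2) \<le> ?s" using mpos by (intro mult_left_mono) auto
    then show ?thesis by simp
  qed
  have "EE (acc \<theta>) \<le> EE (\<lambda>ws. (T ws - ?t)^2) / ?s^2"
    unfolding acc_def
  proof (rule chebyshev[OF s])
    fix ws assume "T ws < real m * (real m - 1) * \<theta>"
    then show "?s \<le> \<bar>T ws - ?t\<bar>" by (simp add: algebra_simps)
  qed
  also have "\<dots> \<le> (4 * real m ^ 3 * (\<beta> * D) + 2 * real m ^ 2 * (\<beta>^2 * real (card I))) / ?s^2"
  proof (rule divide_right_mono)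
    have "EE (\<lambda>ws. (T ws - ?t)^2) = EE (\<lambda>ws. (T ws)^2) - 2 * ?t * EE T + ?t^2"
      by (rule EE_var)
    also have "\<dots> = EE (\<lambda>ws. (T ws)^2) - ?t^2"
      unfolding ET by (simp add: power2_eq_square)
    finally have "EE (\<lambda>ws. (T ws - ?t)^2) = EE (\<lambda>ws. (T ws)^2) - ?t^2" .
    also have "\<dots> \<le> 4 * real m ^ 3 * Bq + 2 * real m ^ 2 * Aq"
      using ET2 by (simp add: power2_eq_square mult_ac)
    also have "\<dots> \<le> 4 * real m ^ 3 * (\<beta> * D) + 2 * real m ^ 2 * (\<beta>^2 * real (card I))"
      by (intro add_mono mult_left_mono Aq_bound[OF qb b0] Bq_bound[OF qb]) auto
    finally show "EE (\<lambda>ws. (T ws - ?t)^2) \<le> \<dots>" .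
  qed simp
  also have "\<dots> \<le> (4 * real m ^ 3 * (\<beta> * D) + 2 * real m ^ 2 * (\<beta>^2 * real (card I))) / (real m * (real m - 1) * D / 2)^2"
  proof (rule divide_left_mono)
    show "(real m * (real m - 1) * D / 2)^2 \<le> ?s^2"
      using sge mpos Dpos by (intro power_mono) auto
    show "0 \<le> 4 * real m ^ 3 * (\<beta> * D) + 2 * real m ^ 2 * (\<beta>^2 * real (card I))"
      using b0 Dpos by simp
    have "real m * (real m - 1) * D / 2 > 0" using mpos Dpos by simp
    hence a: "(real m * (real m - 1) * D / 2)^2 > 0" by (rule zero_less_power)
    have b: "?s^2 > 0" using s by (rule zero_less_power)
    show "0 < ?s^2 * (real m * (real m - 1) * D / 2)^2"
      using a b by (rule mult_pos_pos[rotated])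
  qed
  also have "\<dots> = 16 * \<beta> * real m / ((real m - 1)^2 * D) + 8 * \<beta>^2 * real (card I) / ((real m - 1)^2 * D^2)"
  proof -
    have gen: "(4 * x ^ 3 * (\<beta> * D) + 2 * x ^ 2 * Y) / (x * a * D / 2)^2
       = 16 * \<beta> * x / (a^2 * D) + 8 * Y / (a^2 * D^2)" if "x > 0" "a > 0" for x a Y :: real
      using that Dpos by (simp add: field_simps power2_eq_square power3_eq_cube)
    show ?thesis using gen[OF mpos(2) mpos(1), of "\<beta>^2 * real (card I)"] by (simp add: mult_ac)
  qed
  finally show ?thesis .
qed

end



lemma sum_UNIV_bool: "(\<Sum>b\<in>(UNIV::bool set). f b) = f True + (f False :: real)"
  by (simp add: UNIV_bool)

lemma m1: assumes "e = 2*a - 1" "e > 0" shows "a * (a / e) + (1 - a) * (- ((1 - a) / e)) = (1::real)"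
proof -
  have "a*a - (1-a)*(1-a) = e" unfolding assms(1) by (simp add: algebra_simps)
  then show ?thesis using assms(2) by (simp add: field_simps)
qed
lemma m2: assumes "e = 2*a - 1" "e > 0" shows "a * ((a / e)*(a/e)) + (1 - a) * ((- ((1 - a) / e))*(- ((1 - a) / e))) = 1 + a*(1-a)/(e::real)^2"
proof -
  have "a*(a*a) + (1-a)*((1-a)*(1-a)) = e*e + a*(1-a)" unfolding assms(1) by (simp add: algebra_simps)
  then show ?thesis using assms(2) by (simp add: field_simps power2_eq_square)
qed
lemma m3: assumes "e = 2*a - 1" "e > 0" shows "(1-a) * ((a / e)*(a/e)) + a * ((- ((1 - a) / e))*(- ((1 - a) / e))) = a*(1-a)/(e::real)^2"
proof -
  have "(1-a)*(a*a) + a*((1-a)*(1-a)) = a*(1-a)" unfolding assms(1) by (simp add: algebra_simps)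
  then show ?thesis using assms(2) by (simp add: field_simps power2_eq_square)
qed
lemma m4: assumes "e = 2*a - 1" "e > 0" shows "(1-a) * (a / e) + a * (- ((1 - a) / e)) = (0::real)"
  using assms(2) by (simp add: field_simps)

locale mech =
  fixes k :: nat and r :: real
  assumes r1: "r > 1"
begin

definition "alpha = r / (1 + r)"
definition "NN = k*k + 2*k"
definition tb :: "nat \<times> nat \<Rightarrow> nat \<Rightarrow> bool" where
  "tb x i = (if i < k*k then i = fst x * k + snd x else if i < k*k + k then i - k*k = fst x else i - (k*k+k) = snd x)"
definition q :: "nat \<times> nat \<Rightarrow> nat \<Rightarrow> bool \<Rightarrow> real" where
  "q x i b = (if b = tb x i then alpha else 1 - alpha)"
definition wb :: "nat \<times> nat \<Rightarrow> bool list \<Rightarrow> real" where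
  "wb x bs = (\<Prod>i<NN. q x i (bs!i))"
definition "BS = tuples NN (UNIV::bool set)"
definition "Zs = (to_nat :: bool list \<Rightarrow> nat) ` BS"
definition Wc :: "nat \<times> nat \<Rightarrow> nat \<Rightarrow> real" where
  "Wc x z = wb x (from_nat z)"
definition est1 :: "bool \<Rightarrow> real" where
  "est1 b = (of_bool b - (1 - alpha)) / (2 * alpha - 1)"
definition "sig2 = r / (r - 1)^2"
definition Ex :: "nat \<times> nat \<Rightarrow> (bool list \<Rightarrow> real) \<Rightarrow> real" where
  "Ex x G = (\<Sum>bs\<in>BS. wb x bs * G bs)"

lemma alpha_facts: "0 < alpha" "alpha < 1" "2 * alpha - 1 > 0" "1 - alpha > 0"
  using r1 by (auto simp: alpha_def field_simps)

lemma q_nonneg: "q x i b \<ge> 0" using alpha_facts by (simp add: q_def)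

lemma q_sum: "(\<Sum>b\<in>UNIV. q x i b) = 1"
  by (simp add: sum_UNIV_bool q_def)

lemma finite_BS[simp]: "finite BS" by (simp add: BS_def)
lemma finite_Zs[simp]: "finite Zs" by (simp add: Zs_def)

lemma sum_Zs: "(\<Sum>z\<in>Zs. F z) = (\<Sum>bs\<in>BS. F (to_nat bs))"
  unfolding Zs_def by (rule sum.reindex[unfolded comp_def]) (simp add: inj_on_def)

lemma Ex_J: "J \<subseteq> {..<NN} \<Longrightarrow> Ex x (\<lambda>bs. \<Prod>i\<in>J. g i (bs!i)) = (\<Prod>i\<in>J. \<Sum>b\<in>UNIV. q x i b * g i b)"
  unfolding Ex_def wb_def BS_def
  by (rule sum_prod_tuples_J) (auto simp: q_sum)

lemma Ex_1: "Ex x (\<lambda>_. 1) = 1"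
  using Ex_J[of "{}" x] by simp

lemma wb_nonneg: "wb x bs \<ge> 0" unfolding wb_def by (intro prod_nonneg) (simp add: q_nonneg)

lemma Wc_sum: "(\<Sum>z\<in>Zs. Wc x z) = 1"
  unfolding sum_Zs Wc_def using Ex_1[of x] by (simp add: Ex_def)

lemma Ex_sum: "finite S \<Longrightarrow> Ex x (\<lambda>bs. \<Sum>c\<in>S. G c bs) = (\<Sum>c\<in>S. Ex x (G c))"
  unfolding Ex_def by (simp add: sum_distrib_left sum.swap[of _ S])
lemma Ex_cmult: "Ex x (\<lambda>bs. a * G bs) = a * Ex x G"
  unfolding Ex_def by (simp add: sum_distrib_left mult_ac)
lemma Ex_mono: "(\<And>bs. G bs \<le> H bs) \<Longrightarrow> Ex x G \<le> Ex x H"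
  unfolding Ex_def by (intro sum_mono mult_left_mono) (auto simp: wb_nonneg)

lemma est1_T: "est1 True = alpha / (2*alpha - 1)" by (simp add: est1_def)
lemma est1_F: "est1 False = - ((1 - alpha) / (2*alpha - 1))" by (simp add: est1_def minus_divide_left)

lemma sig2_alt: "sig2 = alpha * (1 - alpha) / (2 * alpha - 1)^2"
proof -
  have a1: "alpha * (1 - alpha) = r / (1 + r)^2" and a2: "2 * alpha - 1 = (r - 1) / (1 + r)"
    using r1 unfolding alpha_def by (simp_all add: field_simps power2_eq_square)
  show ?thesis unfolding a1 a2 sig2_def using r1 by (simp add: power_divide)
qed

lemma mom1: "(\<Sum>b\<in>UNIV. q x i b * est1 b) = of_bool (tb x i)"
  using m1[of "2*alpha - 1" alpha] m4[of "2*alpha - 1" alpha] alpha_facts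
  by (cases "tb x i") (simp_all add: sum_UNIV_bool q_def est1_T est1_F)

lemma mom2: "(\<Sum>b\<in>UNIV. q x i b * (est1 b * est1 b)) = of_bool (tb x i) + sig2"
  using m2[of "2*alpha - 1" alpha] m3[of "2*alpha - 1" alpha] alpha_facts
  by (cases "tb x i") (simp_all add: sum_UNIV_bool q_def est1_T est1_F sig2_alt)

lemma Ex_est1: "i < NN \<Longrightarrow> Ex x (\<lambda>bs. est1 (bs!i)) = of_bool (tb x i)"
  using Ex_J[of "{i}" x "\<lambda>_. est1"] mom1 by simp

lemma Ex_est2: "i < NN \<Longrightarrow> j < NN \<Longrightarrow>
  Ex x (\<lambda>bs. est1 (bs!i) * est1 (bs!j)) = of_bool (tb x i) * of_bool (tb x j) + (if i = j then sig2 else 0)"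
proof (cases "i = j")
  case True
  assume "i < NN"
  then show ?thesis using True Ex_J[of "{i}" x "\<lambda>_ b. est1 b * est1 b"] mom2 by simp
next
  case False
  assume "i < NN" "j < NN"
  then show ?thesis using False Ex_J[of "{i,j}" x "\<lambda>_. est1"] mom1 by simp
qed

lemma sig2_nonneg: "sig2 \<ge> 0" using r1 by (simp add: sig2_def)

lemma QFbits:
  assumes finS: "finite S" and inj: "inj_on \<iota> S" and rng: "\<And>c. c \<in> S \<Longrightarrow> \<iota> c < NN"
    and uniq: "\<And>c c'. c \<in> S \<Longrightarrow> c' \<in> S \<Longrightarrow> tb x (\<iota> c) \<Longrightarrow> tb x (\<iota> c') \<Longrightarrow> c = c'"
  shows "Ex x (\<lambda>bs. (\<Sum>c\<in>S. u c * est1 (bs!(\<iota> c)))^2) \<le> (1 + sig2) * (\<Sum>c\<in>S. (u c)^2)"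
proof -
  let ?t = "\<lambda>c. of_bool (tb x (\<iota> c)) :: real"
  have sq: "(\<Sum>c\<in>S. u c * est1 (bs!(\<iota> c)))^2 = (\<Sum>c\<in>S. \<Sum>c'\<in>S. (u c * u c') * (est1 (bs!(\<iota> c)) * est1 (bs!(\<iota> c'))))" for bs
    unfolding power2_eq_square sum_product by (intro sum.cong refl) (simp add: mult_ac)
  have e2: "Ex x (\<lambda>bs. est1 (bs!(\<iota> c)) * est1 (bs!(\<iota> c'))) = ?t c * ?t c' + (if c = c' then sig2 else 0)"
    if "c \<in> S" "c' \<in> S" for c c'
  proof -
    have "(\<iota> c = \<iota> c') = (c = c')" using inj that by (auto simp: inj_on_def)
    then show ?thesis using Ex_est2[OF rng[OF that(1)] rng[OF that(2)], of x] by simp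
  qed
  have "Ex x (\<lambda>bs. (\<Sum>c\<in>S. u c * est1 (bs!(\<iota> c)))^2)
      = (\<Sum>c\<in>S. \<Sum>c'\<in>S. (u c * u c') * (?t c * ?t c' + (if c = c' then sig2 else 0)))"
    unfolding sq by (simp add: Ex_sum[OF finS] Ex_cmult e2 cong: sum.cong)
  also have "\<dots> = (\<Sum>c\<in>S. u c * ?t c)^2 + sig2 * (\<Sum>c\<in>S. (u c)^2)"
  proof -
    have "(\<Sum>c\<in>S. \<Sum>c'\<in>S. (u c * u c') * (?t c * ?t c' + (if c = c' then sig2 else 0)))
       = (\<Sum>c\<in>S. \<Sum>c'\<in>S. (u c * ?t c) * (u c' * ?t c')) + (\<Sum>c\<in>S. \<Sum>c'\<in>S. if c = c' then sig2 * (u c * u c') else 0)"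
      by (simp add: sum.distrib[symmetric] distrib_left mult_ac if_distrib[of "\<lambda>y. _ * y"] cong: if_cong)
    also have "\<dots> = (\<Sum>c\<in>S. u c * ?t c)^2 + sig2 * (\<Sum>c\<in>S. (u c)^2)"
    proof -
      have A: "(\<Sum>c\<in>S. \<Sum>c'\<in>S. (u c * ?t c) * (u c' * ?t c')) = (\<Sum>c\<in>S. u c * ?t c)^2"
        by (simp only: power2_eq_square sum_product)
      have B: "(\<Sum>c\<in>S. \<Sum>c'\<in>S. if c = c' then sig2 * (u c * u c') else 0) = sig2 * (\<Sum>c\<in>S. (u c)^2)"
        using finS by (simp add: sum.delta power2_eq_square sum_distrib_left)
      show ?thesis unfolding A B ..
    qed
    finally show ?thesis .
  qed
  also have "\<dots> \<le> (\<Sum>c\<in>S. (u c)^2) + sig2 * (\<Sum>c\<in>S. (u c)^2)"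
  proof -
    have "(\<Sum>c\<in>S. u c * ?t c)^2 \<le> (\<Sum>c\<in>S. (u c)^2)"
    proof (cases "\<exists>c0\<in>S. tb x (\<iota> c0)")
      case True
      then obtain c0 where c0: "c0 \<in> S" "tb x (\<iota> c0)" by blast
      have "(\<Sum>c\<in>S. u c * ?t c) = (\<Sum>c\<in>S. if c = c0 then u c0 else 0)"
        by (intro sum.cong refl) (use uniq c0 in auto)
      also have "\<dots> = u c0" using c0 finS by simp
      finally show ?thesis
        using member_le_sum[of c0 S "\<lambda>c. (u c)^2"] c0 finS by simp
    next
      case False
      hence "(\<Sum>c\<in>S. u c * ?t c) = 0" by (intro sum.neutral) auto
      then show ?thesis by (simp add: sum_nonneg)
    qed
    then show ?thesis by simp
  qed
  finally show ?thesis by (simp add: algebra_simps)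
qed

lemma idx_eq: "b < k \<Longrightarrow> b' < k \<Longrightarrow> (a*k+b = a'*k+b') = (a = a' \<and> b = b')"
proof
  assume h: "b < k" "b' < k" "a*k+b = a'*k+b'"
  have "a = (a*k+b) div k" using h(1) by simp
  also have "\<dots> = (a'*k+b') div k" using h(3) by simp
  also have "\<dots> = a'" using h(2) by simp
  finally have 1: "a = a'" .
  have "b = (a*k+b) mod k" using h(1) by simp
  also have "\<dots> = (a'*k+b') mod k" using h(3) by simp
  also have "\<dots> = b'" using h(2) by simp
  finally show "a = a' \<and> b = b'" using 1 by simp
qed auto

lemma idx_lt: "a < k \<Longrightarrow> b < k \<Longrightarrow> a*k+b < k*k"
proof -
  assume "a < k" "b < k"
  then have "a*k+b < a*k+k" by simp
  also have "\<dots> = (a+1)*k" by simp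
  also have "\<dots> \<le> k*k" using \<open>a < k\<close>
    by (metis Suc_eq_plus1 Suc_leI mult_le_mono1)
  finally show ?thesis .
qed

lemma tb_joint: "x \<in> sq k \<Longrightarrow> a < k \<Longrightarrow> b < k \<Longrightarrow> tb x (a*k+b) = (x = (a,b))"
  unfolding tb_def using idx_lt[of a b] idx_eq[of "snd x" b "fst x" a]
  by (cases x) auto

lemma tb_row: "a < k \<Longrightarrow> tb x (k*k+a) = (fst x = a)"
  unfolding tb_def by auto

lemma tb_col: "b < k \<Longrightarrow> tb x (k*k+k+b) = (snd x = b)"
  unfolding tb_def by auto

lemma LDP_wb:
  assumes x: "x \<in> sq k" and x': "x' \<in> sq k"
  shows "wb x bs \<le> r^6 * wb x' bs"
proof -
  let ?L = "[fst x * k + snd x, fst x' * k + snd x', k*k + fst x, k*k + fst x', k*k+k+snd x, k*k+k+snd x']"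
  define Ds where "Ds = {i\<in>{..<NN}. tb x i \<noteq> tb x' i}"
  have Dsub: "Ds \<subseteq> set ?L"
  proof
    fix i assume "i \<in> Ds"
    then have "tb x i \<noteq> tb x' i" by (simp add: Ds_def)
    then show "i \<in> set ?L" unfolding tb_def by (auto split: if_splits)
  qed
  have cardD: "card Ds \<le> 6"
    using card_mono[OF _ Dsub] card_length[of ?L] by simp
  have qle: "q x i b \<le> (if i \<in> Ds then r else 1) * q x' i b" if "i < NN" for i b
  proof (cases "tb x i = tb x' i")
    case True then show ?thesis using that by (simp add: Ds_def q_def)
  next
    case False
    have ar: "alpha = r * (1 - alpha)" using r1 by (simp add: alpha_def field_simps)
    have "1 - alpha \<le> r * alpha" using alpha_facts r1 ar
      by (smt (verit, best) mult_le_cancel_right1)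
    then show ?thesis using False that ar by (auto simp: Ds_def q_def)
  qed
  have "wb x bs \<le> (\<Prod>i<NN. (if i \<in> Ds then r else 1) * q x' i (bs!i))"
    unfolding wb_def by (intro prod_mono) (auto simp: q_nonneg qle)
  also have "\<dots> = (\<Prod>i<NN. if i \<in> Ds then r else 1) * wb x' bs"
    by (simp add: prod.distrib wb_def)
  also have "(\<Prod>i<NN. if i \<in> Ds then r else 1) = r ^ card Ds"
  proof -
    have "(\<Prod>i<NN. if i \<in> Ds then r else 1) = (\<Prod>i\<in>{..<NN} \<inter> Ds. r)"
      by (subst prod.inter_restrict) simp_all
    also have "{..<NN} \<inter> Ds = Ds" by (auto simp: Ds_def)
    finally show ?thesis by simp
  qed
  also have "r ^ card Ds * wb x' bs \<le> r^6 * wb x' bs"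
    using r1 cardD by (intro mult_right_mono power_increasing) (auto simp: wb_nonneg)
  finally show ?thesis .
qed

end



locale mechp = mech +
  fixes p :: "nat \<times> nat \<Rightarrow> real"
  assumes pd: "is_dist (sq k) p"
begin

definition mu :: "nat \<Rightarrow> real" where "mu z = (\<Sum>x\<in>sq k. p x * Wc x z)"
definition Emu :: "(nat \<Rightarrow> real) \<Rightarrow> real" where "Emu G = (\<Sum>z\<in>Zs. mu z * G z)"

definition Yz :: "nat \<Rightarrow> nat \<times> nat \<Rightarrow> real" where "Yz z c = est1 (from_nat z ! (fst c * k + snd c))"
definition Rz :: "nat \<Rightarrow> nat \<Rightarrow> real" where "Rz z a = est1 (from_nat z ! (k*k + a))"
definition Sz :: "nat \<Rightarrow> nat \<Rightarrow> real" where "Sz z b = est1 (from_nat z ! (k*k + k + b))"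
definition p1 where "p1 a = (\<Sum>b<k. p (a,b))"
definition p2 where "p2 b = (\<Sum>a<k. p (a,b))"

lemma p_nonneg: "x \<in> sq k \<Longrightarrow> p x \<ge> 0" using pd by (cases x) (auto simp: is_dist_def)
lemma p_sum: "(\<Sum>x\<in>sq k. p x) = 1" using pd by (simp add: is_dist_def)

lemma Wc_nonneg: "Wc x z \<ge> 0" by (simp add: Wc_def wb_nonneg)

lemma mu_nonneg: "mu z \<ge> 0"
  unfolding mu_def by (intro sum_nonneg mult_nonneg_nonneg p_nonneg Wc_nonneg) auto

lemma Emu_eq: "Emu G = (\<Sum>x\<in>sq k. p x * Ex x (\<lambda>bs. G (to_nat bs)))"
proof -
  have "Emu G = (\<Sum>z\<in>Zs. \<Sum>x\<in>sq k. p x * (Wc x z * G z))"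
    unfolding Emu_def mu_def by (intro sum.cong refl) (simp add: sum_distrib_left sum_distrib_right mult_ac)
  also have "\<dots> = (\<Sum>x\<in>sq k. p x * (\<Sum>z\<in>Zs. Wc x z * G z))"
    by (subst sum.swap) (simp add: sum_distrib_left)
  also have "\<dots> = (\<Sum>x\<in>sq k. p x * Ex x (\<lambda>bs. G (to_nat bs)))"
    by (simp add: sum_Zs Wc_def Ex_def)
  finally show ?thesis .
qed

lemma mu_sum: "(\<Sum>z\<in>Zs. mu z) = 1"
  using Emu_eq[of "\<lambda>_. 1"] by (simp add: Emu_def Ex_1 p_sum)

lemma Emu_bound:
  assumes "\<And>x. x \<in> sq k \<Longrightarrow> Ex x (\<lambda>bs. G (to_nat bs)) \<le> B"
  shows "Emu G \<le> B"
proof -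
  have "Emu G \<le> (\<Sum>x\<in>sq k. p x * B)"
    unfolding Emu_eq by (intro sum_mono mult_left_mono assms p_nonneg) auto
  also have "\<dots> = B" using p_sum by (simp add: sum_distrib_right[symmetric])
  finally show ?thesis .
qed

lemma NN_ge: "k*k \<le> NN" by (simp add: NN_def)

lemma mean_Y: "c \<in> sq k \<Longrightarrow> Emu (\<lambda>z. Yz z c) = p c"
proof -
  assume c: "c \<in> sq k"
  obtain a b where cab: "c = (a,b)" "a < k" "b < k" using c by auto
  have lt: "a*k+b < NN" using idx_lt[OF cab(2,3)] NN_ge by linarith
  have "Emu (\<lambda>z. Yz z c) = (\<Sum>x\<in>sq k. p x * of_bool (x = c))"
    unfolding Emu_eq Yz_def using cab lt
    by (intro sum.cong refl) (simp add: Ex_est1 tb_joint)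
  also have "\<dots> = p c" using c by (simp add: of_bool_def if_distrib[of "\<lambda>y. _ * y"] sum.delta' cong: if_cong)
  finally show ?thesis .
qed

lemma mean_R: "a < k \<Longrightarrow> Emu (\<lambda>z. Rz z a) = p1 a"
proof -
  assume a: "a < k"
  have lt: "k*k + a < NN" using a by (simp add: NN_def)
  have "Emu (\<lambda>z. Rz z a) = (\<Sum>x\<in>sq k. p x * of_bool (fst x = a))"
    unfolding Emu_eq Rz_def using a lt
    by (intro sum.cong refl) (simp add: Ex_est1 tb_row)
  also have "\<dots> = (\<Sum>a'<k. \<Sum>b<k. p (a',b) * of_bool (a' = a))"
    by (simp add: sum.cartesian_product' atLeast0LessThan)
  also have "\<dots> = (\<Sum>a'<k. if a' = a then p1 a else 0)"
    by (intro sum.cong refl) (simp add: p1_def)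
  also have "\<dots> = p1 a" using a by simp
  finally show ?thesis .
qed

lemma mean_S: "b < k \<Longrightarrow> Emu (\<lambda>z. Sz z b) = p2 b"
proof -
  assume b: "b < k"
  have lt: "k*k + k + b < NN" using b by (simp add: NN_def)
  have "Emu (\<lambda>z. Sz z b) = (\<Sum>x\<in>sq k. p x * of_bool (snd x = b))"
    unfolding Emu_eq Sz_def using b lt
    by (intro sum.cong refl) (simp add: Ex_est1 tb_col)
  also have "\<dots> = (\<Sum>a<k. \<Sum>b'<k. p (a,b') * of_bool (b' = b))"
    by (simp add: sum.cartesian_product' atLeast0LessThan)
  also have "\<dots> = (\<Sum>a<k. p (a,b))"
    using b by (intro sum.cong refl) (simp add: of_bool_def if_distrib[of "\<lambda>y. _ * y"] sum.delta' cong: if_cong)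
  also have "\<dots> = p2 b" by (simp add: p2_def)
  finally show ?thesis .
qed

lemma QF_Y: "Emu (\<lambda>z. (\<Sum>c\<in>sq k. u c * Yz z c)^2) \<le> (1 + sig2) * (\<Sum>c\<in>sq k. (u c)^2)"
proof (rule Emu_bound)
  fix x assume x: "x \<in> sq k"
  have "Ex x (\<lambda>bs. (\<Sum>c\<in>sq k. u c * est1 (bs ! (fst c * k + snd c)))^2) \<le> (1 + sig2) * (\<Sum>c\<in>sq k. (u c)^2)"
  proof (rule QFbits)
    show "inj_on (\<lambda>c. fst c * k + snd c) (sq k)"
      by (auto simp: inj_on_def idx_eq)
    show "fst c * k + snd c < NN" if "c \<in> sq k" for c
      using that idx_lt[of "fst c" "snd c"] NN_ge by auto
    show "c = c'" if "c \<in> sq k" "c' \<in> sq k" "tb x (fst c * k + snd c)" "tb x (fst c' * k + snd c')" for c c'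
      using that tb_joint[OF x, of "fst c" "snd c"] tb_joint[OF x, of "fst c'" "snd c'"] by auto
  qed simp
  then show "Ex x (\<lambda>bs. (\<Sum>c\<in>sq k. u c * Yz (to_nat bs) c)^2) \<le> (1 + sig2) * (\<Sum>c\<in>sq k. (u c)^2)"
    by (simp add: Yz_def)
qed

lemma QF_R: "Emu (\<lambda>z. (\<Sum>a<k. u a * Rz z a)^2) \<le> (1 + sig2) * (\<Sum>a<k. (u a)^2)"
proof (rule Emu_bound)
  fix x assume x: "x \<in> sq k"
  have "Ex x (\<lambda>bs. (\<Sum>a<k. u a * est1 (bs ! (k*k + a)))^2) \<le> (1 + sig2) * (\<Sum>a<k. (u a)^2)"
  proof (rule QFbits)
    show "inj_on (\<lambda>a. k*k + a) {..<k}" by (auto simp: inj_on_def)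
    show "k*k + a < NN" if "a \<in> {..<k}" for a using that by (simp add: NN_def)
    show "a = a'" if "a \<in> {..<k}" "a' \<in> {..<k}" "tb x (k*k + a)" "tb x (k*k + a')" for a a'
      using that tb_row by auto
  qed simp
  then show "Ex x (\<lambda>bs. (\<Sum>a<k. u a * Rz (to_nat bs) a)^2) \<le> (1 + sig2) * (\<Sum>a<k. (u a)^2)"
    by (simp add: Rz_def)
qed

lemma QF_S: "Emu (\<lambda>z. (\<Sum>b<k. u b * Sz z b)^2) \<le> (1 + sig2) * (\<Sum>b<k. (u b)^2)"
proof (rule Emu_bound)
  fix x assume x: "x \<in> sq k"
  have "Ex x (\<lambda>bs. (\<Sum>b<k. u b * est1 (bs ! (k*k + k + b)))^2) \<le> (1 + sig2) * (\<Sum>b<k. (u b)^2)"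
  proof (rule QFbits)
    show "inj_on (\<lambda>b. k*k + k + b) {..<k}" by (auto simp: inj_on_def)
    show "k*k + k + b < NN" if "b \<in> {..<k}" for b using that by (simp add: NN_def)
    show "b = b'" if "b \<in> {..<k}" "b' \<in> {..<k}" "tb x (k*k + k + b)" "tb x (k*k + k + b')" for b b'
      using that tb_col by auto
  qed simp
  then show "Ex x (\<lambda>bs. (\<Sum>b<k. u b * Sz (to_nat bs) b)^2) \<le> (1 + sig2) * (\<Sum>b<k. (u b)^2)"
    by (simp add: Sz_def)
qed

definition nu3 :: "nat \<times> nat \<times> nat \<Rightarrow> real" where "nu3 = (\<lambda>(a,b,c). mu a * mu b * mu c)"
definition Vf :: "nat \<times> nat \<times> nat \<Rightarrow> nat \<times> nat \<Rightarrow> real" where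
  "Vf w c = (case w of (z0,z1,z2) \<Rightarrow> Yz z0 c - Rz z1 (fst c) * Sz z2 (snd c))"
definition E3 :: "(nat \<times> nat \<times> nat \<Rightarrow> real) \<Rightarrow> real" where
  "E3 h = (\<Sum>w\<in>Zs\<times>Zs\<times>Zs. nu3 w * h w)"

lemma E3_expand: "E3 h = (\<Sum>z0\<in>Zs. \<Sum>z1\<in>Zs. \<Sum>z2\<in>Zs. mu z0 * mu z1 * mu z2 * h (z0,z1,z2))"
  unfolding E3_def nu3_def by (simp add: sum.cartesian_product')

lemma Emu_mono: "(\<And>z. G z \<le> H z) \<Longrightarrow> Emu G \<le> Emu H"
  unfolding Emu_def by (intro sum_mono mult_left_mono) (auto simp: mu_nonneg)
lemma Emu_sum: "finite S \<Longrightarrow> Emu (\<lambda>z. \<Sum>c\<in>S. G c z) = (\<Sum>c\<in>S. Emu (G c))"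
  unfolding Emu_def by (simp add: sum_distrib_left sum.swap[of _ S])
lemma Emu_cmult: "Emu (\<lambda>z. a * G z) = a * Emu G"
  unfolding Emu_def by (simp add: sum_distrib_left mult_ac)

lemma E3_mono: "(\<And>w. h w \<le> h' w) \<Longrightarrow> E3 h \<le> E3 h'"
  unfolding E3_def nu3_def by (intro sum_mono mult_left_mono) (auto simp: mu_nonneg)
lemma E3_add: "E3 (\<lambda>w. h w + h' w) = E3 h + E3 h'"
  unfolding E3_def by (simp add: distrib_left sum.distrib)
lemma E3_diff: "E3 (\<lambda>w. h w - h' w) = E3 h - E3 h'"
  unfolding E3_def by (simp add: right_diff_distrib sum_subtractf)
lemma E3_cmult: "E3 (\<lambda>w. a * h w) = a * E3 h"
  unfolding E3_def by (simp add: sum_distrib_left mult_ac)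

lemma E3_0: "E3 (\<lambda>(z0,z1,z2). F z0) = Emu F"
proof -
  have "E3 (\<lambda>(z0,z1,z2). F z0) = (\<Sum>z0\<in>Zs. mu z0 * F z0 * ((\<Sum>z1\<in>Zs. mu z1) * (\<Sum>z2\<in>Zs. mu z2)))"
    unfolding E3_expand by (simp add: sum_distrib_left sum_distrib_right mult_ac)
  then show ?thesis by (simp add: mu_sum Emu_def)
qed

lemma E3_12: "E3 (\<lambda>(z0,z1,z2). G z1 z2) = (\<Sum>z2\<in>Zs. mu z2 * Emu (\<lambda>z1. G z1 z2))"
proof -
  have "E3 (\<lambda>(z0,z1,z2). G z1 z2) = (\<Sum>z0\<in>Zs. mu z0 * (\<Sum>z1\<in>Zs. \<Sum>z2\<in>Zs. mu z1 * mu z2 * G z1 z2))"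
    unfolding E3_expand by (simp add: sum_distrib_left mult.assoc)
  also have "\<dots> = (\<Sum>z0\<in>Zs. mu z0) * (\<Sum>z1\<in>Zs. \<Sum>z2\<in>Zs. mu z1 * mu z2 * G z1 z2)"
    by (simp add: sum_distrib_right)
  also have "\<dots> = (\<Sum>z2\<in>Zs. mu z2 * Emu (\<lambda>z1. G z1 z2))"
    unfolding mu_sum Emu_def by (subst sum.swap) (simp add: sum_distrib_left mult_ac)
  finally show ?thesis .
qed

lemma E3_1 [simp]: "E3 (\<lambda>(z0,z1,z2). G z1 * H z2) = Emu G * Emu H"
proof -
  have e: "Emu (\<lambda>z1. G z1 * H z2) = H z2 * Emu G" for z2
    using Emu_cmult[of "H z2" G] by (simp add: mult.commute)
  have f: "(\<Sum>z2\<in>Zs. mu z2 * (H z2 * c)) = c * Emu H" for c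
    by (simp add: Emu_def sum_distrib_left mult_ac)
  show ?thesis unfolding E3_12 e f by simp
qed

lemma mean_V: "c \<in> sq k \<Longrightarrow> E3 (\<lambda>w. Vf w c) = p c - p1 (fst c) * p2 (snd c)"
proof -
  assume c: "c \<in> sq k"
  have "(\<lambda>w. Vf w c) = (\<lambda>w. (\<lambda>(z0,z1,z2). Yz z0 c) w - (\<lambda>(z0,z1,z2). Rz z1 (fst c) * Sz z2 (snd c)) w)"
    by (auto simp: Vf_def)
  then have "E3 (\<lambda>w. Vf w c) = Emu (\<lambda>z. Yz z c) - Emu (\<lambda>z. Rz z (fst c)) * Emu (\<lambda>z. Sz z (snd c))"
    by (simp only: E3_diff E3_0 E3_1)
  then show ?thesis using c by (auto simp: mean_Y mean_R mean_S)
qed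

definition "beta = 2 * (1 + sig2) + 2 * (1 + sig2)^2"

lemma QF_V: "E3 (\<lambda>w. (\<Sum>c\<in>sq k. Vf w c * u c)^2) \<le> beta * (\<Sum>c\<in>sq k. (u c)^2)"
proof -
  let ?s = "1 + sig2"
  define A where "A z0 = (\<Sum>c\<in>sq k. u c * Yz z0 c)" for z0
  define B where "B z1 z2 = (\<Sum>c\<in>sq k. u c * Rz z1 (fst c) * Sz z2 (snd c))" for z1 z2
  define wa where "wa z2 a = (\<Sum>b<k. u (a,b) * Sz z2 b)" for z2 a
  have s0: "?s \<ge> 0" using sig2_nonneg by simp
  have Vsplit: "(\<Sum>c\<in>sq k. Vf w c * u c) = (\<lambda>(z0,z1,z2). A z0 - B z1 z2) w" for w
    by (cases w) (simp add: Vf_def A_def B_def algebra_simps sum_subtractf)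
  have B_alt: "B z1 z2 = (\<Sum>a<k. wa z2 a * Rz z1 a)" for z1 z2
    unfolding B_def wa_def by (simp add: sum.cartesian_product' atLeast0LessThan, intro sum.cong refl)
      (simp add: sum_distrib_left sum_distrib_right mult_ac)
  have "E3 (\<lambda>w. (\<Sum>c\<in>sq k. Vf w c * u c)^2) \<le> E3 (\<lambda>w. 2 * (\<lambda>(z0,z1,z2). (A z0)^2) w + 2 * (\<lambda>(z0,z1,z2). (B z1 z2)^2) w)"
  proof (rule E3_mono)
    fix w :: "nat \<times> nat \<times> nat"
    obtain z0 z1 z2 where w: "w = (z0,z1,z2)" by (cases w) auto
    have "(A z0 - B z1 z2)^2 \<le> 2 * (A z0)^2 + 2 * (B z1 z2)^2"
    proof -
      have "2 * (A z0)^2 + 2 * (B z1 z2)^2 - (A z0 - B z1 z2)^2 = (A z0 + B z1 z2)^2"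
        by (simp add: power2_eq_square algebra_simps)
      then show ?thesis using zero_le_power2[of "A z0 + B z1 z2"] by linarith
    qed
    then show "(\<Sum>c\<in>sq k. Vf w c * u c)^2 \<le> 2 * (\<lambda>(z0,z1,z2). (A z0)^2) w + 2 * (\<lambda>(z0,z1,z2). (B z1 z2)^2) w"
      unfolding Vsplit w by simp
  qed
  also have "\<dots> = 2 * Emu (\<lambda>z. (A z)^2) + 2 * (\<Sum>z2\<in>Zs. mu z2 * Emu (\<lambda>z1. (B z1 z2)^2))"
    by (simp only: E3_add E3_cmult E3_0 E3_12)
  also have "\<dots> \<le> 2 * (?s * (\<Sum>c\<in>sq k. (u c)^2)) + 2 * (?s * ?s * (\<Sum>c\<in>sq k. (u c)^2))"
  proof (intro add_mono mult_left_mono)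
    show "Emu (\<lambda>z. (A z)^2) \<le> ?s * (\<Sum>c\<in>sq k. (u c)^2)"
      unfolding A_def by (rule QF_Y)
    have "(\<Sum>z2\<in>Zs. mu z2 * Emu (\<lambda>z1. (B z1 z2)^2)) \<le> (\<Sum>z2\<in>Zs. mu z2 * (?s * (\<Sum>a<k. (wa z2 a)^2)))"
      by (intro sum_mono mult_left_mono) (auto simp: B_alt QF_R mu_nonneg)
    also have "\<dots> = ?s * Emu (\<lambda>z2. \<Sum>a<k. (wa z2 a)^2)"
      by (simp add: Emu_def sum_distrib_left mult_ac)
    also have "\<dots> = ?s * (\<Sum>a<k. Emu (\<lambda>z2. (wa z2 a)^2))"
      by (simp add: Emu_sum)
    also have "\<dots> \<le> ?s * (\<Sum>a<k. ?s * (\<Sum>b<k. (u (a,b))^2))"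
      using s0 by (intro mult_left_mono sum_mono) (auto simp: wa_def QF_S)
    also have "\<dots> = ?s * ?s * (\<Sum>c\<in>sq k. (u c)^2)"
      by (simp add: sum.cartesian_product' atLeast0LessThan sum_distrib_left mult.assoc)
    finally show "(\<Sum>z2\<in>Zs. mu z2 * Emu (\<lambda>z1. (B z1 z2)^2)) \<le> ?s * ?s * (\<Sum>c\<in>sq k. (u c)^2)" .
  qed auto
  also have "\<dots> = beta * (\<Sum>c\<in>sq k. (u c)^2)"
    by (simp add: beta_def algebra_simps power2_eq_square)
  finally show ?thesis .
qed

end



lemma accept_collapse:
  assumes fX: "finite X"
  shows "accept_prob n X Z p W f = (\<Sum>zs\<in>tuples n Z. (\<Prod>j<n. (\<Sum>x\<in>X. p x * W x (zs!j))) * f zs)"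
proof -
  have "accept_prob n X Z p W f = (\<Sum>zs\<in>tuples n Z. \<Sum>xs\<in>tuples n X. (\<Prod>j<n. p (xs ! j) * W (xs ! j) (zs ! j)) * f zs)"
    unfolding accept_prob_def by (rule sum.swap)
  also have "\<dots> = (\<Sum>zs\<in>tuples n Z. (\<Prod>j<n. (\<Sum>x\<in>X. p x * W x (zs!j))) * f zs)"
  proof (rule sum.cong[OF refl])
    fix zs
    have "(\<Sum>xs\<in>tuples n X. (\<Prod>j<n. p (xs ! j) * W (xs ! j) (zs ! j))) = (\<Prod>j<n. (\<Sum>x\<in>X. p x * W x (zs!j)))"
      by (rule sum_prod_tuples[OF fX, where h="\<lambda>j x. p x * W x (zs!j)"])
    then show "(\<Sum>xs\<in>tuples n X. (\<Prod>j<n. p (xs ! j) * W (xs ! j) (zs ! j)) * f zs) = (\<Prod>j<n. (\<Sum>x\<in>X. p x * W x (zs!j))) * f zs"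
      by (simp only: sum_distrib_right[symmetric])
  qed
  finally show ?thesis .
qed

lemma cauchy_schwarz_sum:
  assumes "finite S"
  shows "(\<Sum>c\<in>S. f c)^2 \<le> real (card S) * (\<Sum>c\<in>S. (f c)^2)"
proof -
  have "(\<Sum>c\<in>S. f c)^2 = (\<Sum>c\<in>S. \<Sum>c'\<in>S. f c * f c')"
    by (simp add: power2_eq_square sum_product)
  also have "\<dots> \<le> (\<Sum>c\<in>S. \<Sum>c'\<in>S. ((f c)^2 + (f c')^2) / 2)"
  proof (intro sum_mono)
    fix c c'
    have "0 \<le> (f c - f c')^2" by simp
    then show "f c * f c' \<le> ((f c)^2 + (f c')^2) / 2" by (simp add: power2_eq_square algebra_simps)
  qed
  also have "\<dots> = real (card S) * (\<Sum>c\<in>S. (f c)^2)"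
  proof -
    have a: "(\<Sum>c\<in>S. \<Sum>c'\<in>S. ((f c)^2 + (f c')^2) / 2) = (\<Sum>c\<in>S. \<Sum>c'\<in>S. (f c)^2 / 2) + (\<Sum>c\<in>S. \<Sum>c'\<in>S. (f c')^2 / 2)"
      by (simp only: add_divide_distrib sum.distrib)
    have b: "(\<Sum>c\<in>S. \<Sum>c'\<in>S. (f c)^2 / 2) = real (card S) * (\<Sum>c\<in>S. (f c)^2) / 2"
      by (simp add: sum_distrib_left sum_divide_distrib)
    have c: "(\<Sum>c\<in>S. \<Sum>c'\<in>S. (f c')^2 / 2) = real (card S) * (\<Sum>c\<in>S. (f c)^2) / 2"
      by (simp add: sum_divide_distrib[symmetric])
    show ?thesis unfolding a b c by simp
  qed
  finally show ?thesis .
qed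

context mechp
begin

lemma p1_nonneg: "a < k \<Longrightarrow> p1 a \<ge> 0" unfolding p1_def by (intro sum_nonneg p_nonneg) auto
lemma p2_nonneg: "b < k \<Longrightarrow> p2 b \<ge> 0" unfolding p2_def by (intro sum_nonneg p_nonneg) auto
lemma sq_sum: "(\<Sum>c\<in>sq k. g c) = (\<Sum>a<k. \<Sum>b<k. g (a,b))"
  by (simp add: sum.cartesian_product' atLeast0LessThan)
lemma p1_sum: "(\<Sum>a<k. p1 a) = 1" using p_sum by (simp add: p1_def sq_sum)
lemma p2_sum: "(\<Sum>b<k. p2 b) = 1"
proof -
  have "(\<Sum>b<k. p2 b) = (\<Sum>a<k. \<Sum>b<k. p (a,b))" unfolding p2_def by (rule sum.swap)
  then show ?thesis using p_sum by (simp add: sq_sum)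
qed

lemma prod_marg:
  assumes "is_product k p" and c: "c \<in> sq k"
  shows "p c = p1 (fst c) * p2 (snd c)"
proof -
  obtain q1 q2 where q: "is_dist {0..<k} q1" "is_dist {0..<k} q2"
    and pq: "\<forall>x1\<in>{0..<k}. \<forall>x2\<in>{0..<k}. p (x1, x2) = q1 x1 * q2 x2"
    using assms(1) unfolding is_product_def by blast
  have s1: "(\<Sum>a<k. q1 a) = 1" and s2: "(\<Sum>b<k. q2 b) = 1"
    using q by (simp_all add: is_dist_def atLeast0LessThan)
  have "p1 a = q1 a" if "a < k" for a
    using that pq s2 by (simp add: p1_def sum_distrib_left[symmetric])
  moreover have "p2 b = q2 b" if "b < k" for b
    using that pq s1 by (simp add: p2_def sum_distrib_right[symmetric])
  ultimately show ?thesis using c pq by (cases c) auto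
qed

lemma far_D:
  assumes far: "far_from_product k \<gamma> p" and g: "\<gamma> > 0" and k1: "k \<ge> 1"
  shows "(\<Sum>c\<in>sq k. (p c - p1 (fst c) * p2 (snd c))^2) \<ge> 4 * \<gamma>^2 / (real k)^2"
proof -
  define q where "q c = p1 (fst c) * p2 (snd c)" for c
  have qs: "(\<Sum>c\<in>sq k. q c) = 1"
  proof -
    have "(\<Sum>c\<in>sq k. q c) = (\<Sum>a<k. p1 a * (\<Sum>b<k. p2 b))"
      unfolding sq_sum q_def by (simp add: sum_distrib_left)
    then show ?thesis using p1_sum p2_sum by simp
  qed
  have qn: "\<forall>c\<in>sq k. q c \<ge> 0"
    unfolding q_def by (auto intro!: mult_nonneg_nonneg p1_nonneg p2_nonneg)
  have qd: "is_dist (sq k) q" using qs qn by (simp add: is_dist_def)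
  have qp: "is_product k q"
    unfolding is_product_def q_def using p1_sum p2_sum
    by (intro exI[of _ p1] exI[of _ p2]) (auto simp: is_dist_def p1_nonneg p2_nonneg atLeast0LessThan)
  have "dtv (sq k) p q > \<gamma>" using far qd qp unfolding far_from_product_def by blast
  then have l1: "(\<Sum>c\<in>sq k. \<bar>p c - q c\<bar>) > 2 * \<gamma>" by (simp add: dtv_def)
  have "(2 * \<gamma>)^2 \<le> (\<Sum>c\<in>sq k. \<bar>p c - q c\<bar>)^2"
    using l1 g by (intro power_mono) auto
  also have "\<dots> \<le> real (card (sq k)) * (\<Sum>c\<in>sq k. \<bar>p c - q c\<bar>^2)"
    by (rule cauchy_schwarz_sum) simp
  also have "\<dots> = (real k)^2 * (\<Sum>c\<in>sq k. (p c - q c)^2)"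
    by (simp add: power2_eq_square)
  finally have "4 * \<gamma>^2 \<le> (real k)^2 * (\<Sum>c\<in>sq k. (p c - q c)^2)"
    by (simp add: power_mult_distrib)
  moreover have "(real k)^2 > 0" using k1 by simp
  ultimately show ?thesis by (simp add: q_def pos_divide_le_eq mult.commute)
qed

end



lemma num_prod:
  fixes B K G M :: real
  assumes B: "B > 0" and K: "K \<ge> 1" and G: "G > 0" and M: "M \<ge> 48 * (B * K^3 / G)"
  shows "2 * B^2 * K^2 / (M^2 * (2 * G / K^2)^2) \<le> 1/3"
proof -
  define X where "X = B * K^3 / G"
  have X0: "X > 0" using B K G by (simp add: X_def)
  have M0: "M > 0" using M X0 unfolding X_def by linarith
  have e: "2 * B^2 * K^2 / (M^2 * (2 * G / K^2)^2) = X^2 / (2 * M^2)"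
    using K G M0 by (simp add: X_def field_simps power2_eq_square power3_eq_cube)
  have "(48 * X)^2 \<le> M^2" using M X0 unfolding X_def[symmetric] by (intro power_mono) auto
  hence "X^2 \<le> M^2 / 2304" by (simp add: power_mult_distrib)
  hence "X^2 / (2 * M^2) \<le> (M^2 / 2304) / (2 * M^2)" using M0 by (intro divide_right_mono) auto
  also have "\<dots> = 1 / 4608" using M0 by (simp add: field_simps)
  finally show ?thesis unfolding e by simp
qed

lemma num_far:
  fixes B K G M D :: real
  assumes B: "B \<ge> 1" and K: "K \<ge> 1" and G: "G > 0" "G \<le> 1" and M: "M \<ge> 48 * (B * K^3 / G)"
    and D: "D \<ge> 2 * (2 * G / K^2)"
  shows "16 * B * (M + 1) / (M^2 * D) + 8 * B^2 * K^2 / (M^2 * D^2) \<le> 1/3"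
proof -
  define X where "X = B * K^3 / G"
  have X1: "X \<ge> 1"
  proof -
    have "K^3 \<ge> 1" using K by simp
    hence "B * K^3 \<ge> 1" using B by (metis mult_mono' one_le_power order_trans mult_1 zero_le_one K)
    hence "B * K^3 \<ge> G" using G by linarith
    thus ?thesis using G by (simp add: X_def)
  qed
  have M1: "M \<ge> 48" using M X1 unfolding X_def[symmetric] by linarith
  have M0: "M > 0" using M1 by linarith
  have D0: "D > 0" using D G K by (smt (verit) divide_pos_pos zero_less_power)
  have DK: "1 / D \<le> K^2 / (4 * G)"
  proof -
    have "4 * G / K^2 \<le> D" using D by simp
    moreover have "0 < 4 * G / K^2" using G K by simp
    ultimately have "inverse D \<le> inverse (4 * G / K^2)"
      by (intro le_imp_inverse_le)
    hence "1 / D \<le> 1 / (4 * G / K^2)" by (simp only: inverse_eq_divide)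
    thus ?thesis by simp
  qed
  have t1: "16 * B * (M + 1) / (M^2 * D) \<le> 1/6"
  proof -
    have "16 * B * (M + 1) / (M^2 * D) \<le> 32 * B * M / (M^2 * D)"
      using M1 B D0 by (intro divide_right_mono) auto
    also have "\<dots> = 32 * B / M * (1 / D)" using M0 by (simp add: power2_eq_square field_simps)
    also have "\<dots> \<le> 32 * B / M * (K^2 / (4 * G))"
      using DK B M0 by (intro mult_left_mono) auto
    also have "\<dots> = 8 * (B * K^2 / G) / M" using G by (simp add: field_simps)
    also have "\<dots> \<le> 8 * X / M"
    proof -
      have "K^2 \<le> K^3" using K by (simp add: power_increasing)
      hence "B * K^2 / G \<le> X" unfolding X_def using B G by (intro divide_right_mono mult_left_mono) auto
      thus ?thesis using M0 by (intro divide_right_mono) auto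
    qed
    also have "\<dots> \<le> 1/6"
    proof -
      have "8 * X \<le> M / 6" using M unfolding X_def[symmetric] by simp
      thus ?thesis using M0 by (simp add: field_simps)
    qed
    finally show ?thesis .
  qed
  have t2: "8 * B^2 * K^2 / (M^2 * D^2) \<le> 1/6"
  proof -
    have "1 / D^2 \<le> (K^2 / (4 * G))^2"
      using DK D0 by (metis power_mono power_one_over zero_le_divide_1_iff less_imp_le)
    hence "8 * B^2 * K^2 / M^2 * (1 / D^2) \<le> 8 * B^2 * K^2 / M^2 * (K^2 / (4 * G))^2"
      by (intro mult_left_mono) auto
    also have "\<dots> = X^2 / (2 * M^2)" using G K M0 by (simp add: X_def field_simps power2_eq_square power3_eq_cube)
    also have "\<dots> \<le> 1/6"
    proof -
      have "(48 * X)^2 \<le> M^2" using M X1 unfolding X_def[symmetric] by (intro power_mono) auto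
      hence "X^2 \<le> M^2 / 2304" by (simp add: power_mult_distrib)
      hence "X^2 / (2 * M^2) \<le> (M^2 / 2304) / (2 * M^2)" using M0 by (intro divide_right_mono) auto
      also have "\<dots> = 1 / 4608" using M0 by (simp add: field_simps)
      finally show ?thesis by simp
    qed
    finally show ?thesis by (simp add: field_simps)
  qed
  show ?thesis using t1 t2 by simp
qed

lemma sig_bound:
  fixes e :: real
  assumes e: "0 < e" "e \<le> 1"
  shows "1 + exp (e/6) / (exp (e/6) - 1)^2 \<le> 43 / e^2"
proof -
  define d where "d = exp (e/6) - 1"
  have d: "d \<ge> e/6" using exp_ge_add_one_self[of "e/6"] unfolding d_def by linarith
  have d0: "d > 0" using d e by linarith
  have "exp (e/6) / (exp (e/6) - 1)^2 = 1/d + 1/d^2"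
    using d0 by (simp add: d_def[symmetric] field_simps power2_eq_square) (simp add: d_def)
  also have "\<dots> \<le> 6/e + 36/e^2"
  proof (intro add_mono)
    show "1/d \<le> 6/e" using d d0 e by (simp add: field_simps)
    have "(e/6)^2 \<le> d^2" using d e by (intro power_mono) auto
    thus "1/d^2 \<le> 36/e^2" using e d0 by (simp add: field_simps power2_eq_square)
  qed
  also have "\<dots> \<le> 6/e^2 + 36/e^2"
  proof -
    have "e^2 \<le> e" using e by (simp add: power2_eq_square mult_le_cancel_left1)
    hence "6/e \<le> 6/e^2" using e by (intro divide_left_mono) auto
    thus ?thesis by simp
  qed
  finally have "exp (e/6) / (exp (e/6) - 1)^2 \<le> 42/e^2" by simp
  moreover have "1 \<le> 1/e^2" using e by (simp add: power_le_one)
  ultimately show ?thesis by simp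
qed



lemma params:
  fixes k n :: nat and g e B :: real
  assumes k: "k \<ge> 2" and g: "0 < g" "g \<le> 1" and e: "0 < e" "e \<le> 1"
    and n: "real n \<ge> 1100000 * real k ^ 3 / (g^2 * e^4)"
    and B: "B \<le> 7396 / e^4"
  shows "real (n div 3) - 1 \<ge> 48 * (B * real k ^ 3 / g^2)"
proof -
  define Q where "Q = real k ^ 3 / (g^2 * e^4)"
  have Q1: "Q \<ge> 1"
  proof -
    have "real k ^ 3 \<ge> 1" using k by simp
    moreover have "g^2 * e^4 \<le> 1" using g e by (simp add: mult_le_one power_le_one)
    moreover have "g^2 * e^4 > 0" using g e by simp
    ultimately show ?thesis unfolding Q_def by (simp add: le_divide_eq)
  qed
  have "n \<le> 3 * (n div 3) + 2" by linarith
  hence a: "real n \<le> 3 * real (n div 3) + 2" by linarith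
  moreover have "real n \<ge> 1100000 * Q" using n by (simp add: Q_def)
  ultimately have "3 * (real (n div 3) - 1) \<ge> 1100000 * Q - 5"
    using [[linarith_split_limit=0]] by (simp add: algebra_simps)
  hence m: "real (n div 3) - 1 \<ge> (1100000 * Q - 5) / 3" by simp
  have "48 * (B * real k ^ 3 / g^2) \<le> 48 * (7396 / e^4 * real k ^ 3 / g^2)"
    using B g by (intro mult_left_mono divide_right_mono mult_right_mono) auto
  also have "\<dots> = 355008 * Q" using e g by (simp add: Q_def field_simps)
  also have "\<dots> \<le> (1100000 * Q - 5) / 3" using Q1 by simp
  finally show ?thesis using m by linarith
qed


theorem theorem6p1:
  "\<exists>C::real. C > 0 \<and>
    (\<forall>(k::nat) (\<gamma>::real) (\<epsilon>::real) (n::nat).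
       k \<ge> 2 \<and> 0 < \<gamma> \<and> \<gamma> \<le> 1 \<and> 0 < \<epsilon> \<and> \<epsilon> \<le> 1 \<and>
       real n \<ge> C * real k ^ 3 / (\<gamma>\<^sup>2 * \<epsilon> ^ 4) \<longrightarrow>
       (\<exists>(Z::nat set) (W::nat \<times> nat \<Rightarrow> nat \<Rightarrow> real) (f::nat list \<Rightarrow> real).
          is_channel (sq k) Z W \<and> is_LDP \<epsilon> (sq k) Z W \<and>
          (\<forall>zs. 0 \<le> f zs \<and> f zs \<le> 1) \<and>
          (\<forall>p. is_dist (sq k) p \<and> is_product k p \<longrightarrow>
                accept_prob n (sq k) Z p W f \<ge> 2/3) \<and>
          (\<forall>p. is_dist (sq k) p \<and> far_from_product k \<gamma> p \<longrightarrow>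
                1 - accept_prob n (sq k) Z p W f \<ge> 2/3)))"
proof (intro exI[of _ "1100000"] conjI allI impI)
  show "(1100000::real) > 0" by simp
  fix k :: nat and \<gamma> \<epsilon> :: real and n :: nat
  assume H: "k \<ge> 2 \<and> 0 < \<gamma> \<and> \<gamma> \<le> 1 \<and> 0 < \<epsilon> \<and> \<epsilon> \<le> 1 \<and>
       real n \<ge> 1100000 * real k ^ 3 / (\<gamma>\<^sup>2 * \<epsilon> ^ 4)"
  then have k2: "k \<ge> 2" and g: "0 < \<gamma>" "\<gamma> \<le> 1" and e: "0 < \<epsilon>" "\<epsilon> \<le> 1"
    and nb: "real n \<ge> 1100000 * real k ^ 3 / (\<gamma>\<^sup>2 * \<epsilon> ^ 4)" by auto
  define r where "r = exp (\<epsilon>/6)"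
  have r1: "r > 1" using e by (simp add: r_def)
  interpret mech k r by unfold_locales (rule r1)
  define m where "m = n div 3"
  define \<theta> where "\<theta> = 2 * \<gamma>^2 / (real k)^2"
  define Tf where "Tf ws = (\<Sum>g<m. \<Sum>h<m. if g = h then 0 else
      \<Sum>c\<in>sq k. mechp.Vf k r (ws!g) c * mechp.Vf k r (ws!h) c)" for ws
  define f where "f zs = (if Tf (grp m zs) < real m * (real m - 1) * \<theta> then 1 else (0::real))" for zs
  have g2: "\<gamma> * \<gamma> \<le> 1" using g by (simp add: mult_le_one)
  have th0: "\<theta> > 0" using g k2 by (simp add: \<theta>_def)
  have sigb: "1 + sig2 \<le> 43 / \<epsilon>^2"
    using sig_bound[OF e] unfolding sig2_def by (simp add: r_def)
  have s1: "1 + sig2 \<ge> 1" using sig2_nonneg by simp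
  define bet where "bet = 2 * (1 + sig2) + 2 * (1 + sig2)^2"
  note betadef = bet_def
  have aux: "1 \<le> 2 * s + 2 * s^2" if "s \<ge> 1" for s :: real
  proof -
    have "0 \<le> s^2" by simp
    then show ?thesis using that by linarith
  qed
  have beta1: "bet \<ge> 1" unfolding betadef by (rule aux[OF s1])
  have betab: "bet \<le> 7396 / \<epsilon>^4"
  proof -
    have aux2: "2 * s + 2 * s^2 \<le> 4 * s^2" if "s \<ge> 1" for s :: real
    proof -
      have "1 * s \<le> s * s" using that by (intro mult_right_mono) auto
      then show ?thesis by (simp add: power2_eq_square)
    qed
    have "bet \<le> 4 * (1 + sig2)^2"
      unfolding betadef by (rule aux2[OF s1])
    also have "\<dots> \<le> 4 * (43 / \<epsilon>^2)^2"
      using sigb s1 by (intro mult_left_mono power_mono) auto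
    also have "\<dots> = 7396 / \<epsilon>^4"
    proof -
      have "\<epsilon>^4 = \<epsilon>^2 * \<epsilon>^2" by (simp add: power_add[symmetric])
      then show ?thesis by (simp add: power_divide)
    qed
    finally show ?thesis .
  qed
  have Mb: "real m - 1 \<ge> 48 * (bet * real k ^ 3 / \<gamma>^2)"
    unfolding m_def using params[OF k2 g e nb betab] .
  have m2: "m \<ge> 2"
  proof -
    have "48 * (bet * real k ^ 3 / \<gamma>^2) \<ge> 0" using beta1 g by simp
    hence "real m \<ge> 1 + 48 * (bet * real k ^ 3 / \<gamma>^2)" using Mb by linarith
    moreover have "bet * real k ^ 3 / \<gamma>^2 \<ge> 1"
    proof -
      have "real k ^ 3 \<ge> 1" using k2 by simp
      hence "bet * real k ^ 3 \<ge> 1" using beta1 by (metis mult_mono' mult_1 zero_le_one order_trans)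
      moreover have "\<gamma>^2 \<le> 1" using g by (simp add: power_le_one)
      ultimately show ?thesis using g by (simp add: le_divide_eq)
    qed
    ultimately show ?thesis by linarith
  qed
  have m3n: "3 * m \<le> n" by (simp add: m_def)
  have Wc_nonneg_aux: "Wc x z \<ge> 0" for x z by (simp add: Wc_def wb_nonneg)
  have hch: "is_channel (sq k) Zs Wc"
    unfolding is_channel_def is_dist_def using Wc_sum by (auto simp: Wc_nonneg_aux)
  have hldp: "is_LDP \<epsilon> (sq k) Zs Wc"
  proof -
    have "r^6 = exp \<epsilon>" unfolding r_def by (simp add: exp_of_nat_mult[symmetric])
    then show ?thesis unfolding is_LDP_def Wc_def using LDP_wb by auto
  qed
  have hf: "\<forall>zs. 0 \<le> f zs \<and> f zs \<le> 1" by (simp add: f_def)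
  have hprod: "\<forall>p. is_dist (sq k) p \<and> is_product k p \<longrightarrow> accept_prob n (sq k) Zs p Wc f \<ge> 2/3"
  proof (intro allI impI)
    fix p assume pp: "is_dist (sq k) p \<and> is_product k p"
    interpret P: mechp k r p by unfold_locales (use pp in auto)
    have nu3_sum: "(\<Sum>w\<in>Zs\<times>Zs\<times>Zs. P.nu3 w) = 1"
    proof -
      have c: "(\<lambda>(z0::nat, z1::nat, z2::nat). (\<lambda>_. 1::real) z0) = (\<lambda>_. 1)" by auto
      have "P.E3 (\<lambda>_. 1) = P.Emu (\<lambda>_. 1)" using P.E3_0[of "\<lambda>_. 1"] unfolding c .
      moreover have "P.Emu (\<lambda>_. 1) = 1" unfolding P.Emu_def using P.mu_sum by simp
      moreover have "P.E3 (\<lambda>_. 1) = (\<Sum>w\<in>Zs\<times>Zs\<times>Zs. P.nu3 w)" unfolding P.E3_def by simp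
      ultimately show ?thesis by simp
    qed
    interpret U: ustat "Zs\<times>Zs\<times>Zs" P.nu3 m P.Vf "sq k"
    proof -
      have nn: "P.nu3 w \<ge> 0" for w by (cases w) (auto simp: P.nu3_def P.mu_nonneg)
      show "ustat (Zs\<times>Zs\<times>Zs) P.nu3 (sq k)" by unfold_locales (auto simp: nu3_sum nn)
    qed
    have key: "accept_prob n (sq k) Zs p Wc f = U.EE (U.acc \<theta>)"
    proof -
      have "accept_prob n (sq k) Zs p Wc f = (\<Sum>zs\<in>tuples n Zs. (\<Prod>j<n. P.mu (zs!j)) * f zs)"
        by (simp add: accept_collapse P.mu_def)
      also have "\<dots> = (\<Sum>ws\<in>tuples m (Zs\<times>Zs\<times>Zs). (\<Prod>g<m. P.nu3 (ws!g)) * U.acc \<theta> ws)"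
      proof -
        have "f zs = (\<lambda>ws. U.acc \<theta> ws) (grp m zs)" for zs
          unfolding f_def U.acc_def U.T_def U.K_def Tf_def by simp
        then show ?thesis
          using sum_grp[OF finite_Zs P.mu_sum m3n, of "\<lambda>ws. U.acc \<theta> ws"]
          by (simp add: P.nu3_def)
      qed
      also have "\<dots> = U.EE (U.acc \<theta>)" by (simp add: U.EE_def)
      finally show ?thesis .
    qed
    have E1E3: "U.E1 h = P.E3 h" for h by (simp add: U.E1_def P.E3_def)
    have v0: "U.v c = 0" if "c \<in> sq k" for c
      unfolding U.v_def E1E3 P.mean_V[OF that] using P.prod_marg[OF _ that] pp by simp
    have D0: "U.D = 0" unfolding U.D_def by (simp add: v0)
    have qb: "(\<Sum>c\<in>sq k. \<Sum>c'\<in>sq k. U.M c c' * u c * u c') \<le> bet * (\<Sum>c\<in>sq k. (u c)^2)" for u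
      unfolding U.QF[symmetric] E1E3 using P.QF_V[of u] by (simp add: mult.commute P.beta_def bet_def)
    have "1 - U.EE (U.acc \<theta>) \<le> 2 * (bet)^2 * real (card (sq k)) / ((real m - 1)^2 * \<theta>^2)"
      by (rule U.acc_prod[OF D0 qb _ m2 th0]) (use beta1 in simp)
    also have "\<dots> \<le> 1/3"
      using num_prod[of "bet" "real k" "\<gamma>^2" "real m - 1"] beta1 k2 g Mb
      by (simp add: \<theta>_def power2_eq_square)
    finally show "accept_prob n (sq k) Zs p Wc f \<ge> 2/3" using key by simp
  qed
  have hfar: "\<forall>p. is_dist (sq k) p \<and> far_from_product k \<gamma> p \<longrightarrow> 1 - accept_prob n (sq k) Zs p Wc f \<ge> 2/3"
  proof (intro allI impI)
    fix p assume pp: "is_dist (sq k) p \<and> far_from_product k \<gamma> p"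
    interpret P: mechp k r p by unfold_locales (use pp in auto)
    have nu3_sum: "(\<Sum>w\<in>Zs\<times>Zs\<times>Zs. P.nu3 w) = 1"
    proof -
      have c: "(\<lambda>(z0::nat, z1::nat, z2::nat). (\<lambda>_. 1::real) z0) = (\<lambda>_. 1)" by auto
      have "P.E3 (\<lambda>_. 1) = P.Emu (\<lambda>_. 1)" using P.E3_0[of "\<lambda>_. 1"] unfolding c .
      moreover have "P.Emu (\<lambda>_. 1) = 1" unfolding P.Emu_def using P.mu_sum by simp
      moreover have "P.E3 (\<lambda>_. 1) = (\<Sum>w\<in>Zs\<times>Zs\<times>Zs. P.nu3 w)" unfolding P.E3_def by simp
      ultimately show ?thesis by simp
    qed
    interpret U: ustat "Zs\<times>Zs\<times>Zs" P.nu3 m P.Vf "sq k"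
    proof -
      have nn: "P.nu3 w \<ge> 0" for w by (cases w) (auto simp: P.nu3_def P.mu_nonneg)
      show "ustat (Zs\<times>Zs\<times>Zs) P.nu3 (sq k)" by unfold_locales (auto simp: nu3_sum nn)
    qed
    have key: "accept_prob n (sq k) Zs p Wc f = U.EE (U.acc \<theta>)"
    proof -
      have "accept_prob n (sq k) Zs p Wc f = (\<Sum>zs\<in>tuples n Zs. (\<Prod>j<n. P.mu (zs!j)) * f zs)"
        by (simp add: accept_collapse P.mu_def)
      also have "\<dots> = (\<Sum>ws\<in>tuples m (Zs\<times>Zs\<times>Zs). (\<Prod>g<m. P.nu3 (ws!g)) * U.acc \<theta> ws)"
      proof -
        have "f zs = (\<lambda>ws. U.acc \<theta> ws) (grp m zs)" for zs
          unfolding f_def U.acc_def U.T_def U.K_def Tf_def by simp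
        then show ?thesis
          using sum_grp[OF finite_Zs P.mu_sum m3n, of "\<lambda>ws. U.acc \<theta> ws"]
          by (simp add: P.nu3_def)
      qed
      also have "\<dots> = U.EE (U.acc \<theta>)" by (simp add: U.EE_def)
      finally show ?thesis .
    qed
    have E1E3: "U.E1 h = P.E3 h" for h by (simp add: U.E1_def P.E3_def)
    have vv: "U.v c = p c - P.p1 (fst c) * P.p2 (snd c)" if "c \<in> sq k" for c
      unfolding U.v_def E1E3 P.mean_V[OF that] ..
    have D2: "U.D \<ge> 2 * \<theta>"
    proof -
      have "U.D = (\<Sum>c\<in>sq k. (p c - P.p1 (fst c) * P.p2 (snd c))^2)"
        unfolding U.D_def by (intro sum.cong refl) (simp add: vv)
      moreover have "(\<Sum>c\<in>sq k. (p c - P.p1 (fst c) * P.p2 (snd c))^2) \<ge> 4 * \<gamma>^2 / (real k)^2"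
        using P.far_D[of \<gamma>] pp g k2 by simp
      ultimately show ?thesis by (simp add: \<theta>_def)
    qed
    have qb: "(\<Sum>c\<in>sq k. \<Sum>c'\<in>sq k. U.M c c' * u c * u c') \<le> bet * (\<Sum>c\<in>sq k. (u c)^2)" for u
      unfolding U.QF[symmetric] E1E3 using P.QF_V[of u] by (simp add: mult.commute P.beta_def bet_def)
    have "U.EE (U.acc \<theta>) \<le> 16 * bet * real m / ((real m - 1)^2 * U.D) + 8 * (bet)^2 * real (card (sq k)) / ((real m - 1)^2 * U.D^2)"
      by (rule U.acc_far[OF D2 qb _ m2 th0]) (use beta1 in simp)
    also have "\<dots> \<le> 1/3"
    proof -
      have "real m = (real m - 1) + 1" by simp
      then show ?thesis
        using num_far[of "bet" "real k" "\<gamma>^2" "real m - 1" U.D] beta1 k2 g Mb D2 g2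
        by (simp add: \<theta>_def power2_eq_square power_le_one)
    qed
    finally show "1 - accept_prob n (sq k) Zs p Wc f \<ge> 2/3" using key by simp
  qed
  show "\<exists>(Z::nat set) (W::nat \<times> nat \<Rightarrow> nat \<Rightarrow> real) (f::nat list \<Rightarrow> real).
          is_channel (sq k) Z W \<and> is_LDP \<epsilon> (sq k) Z W \<and>
          (\<forall>zs. 0 \<le> f zs \<and> f zs \<le> 1) \<and>
          (\<forall>p. is_dist (sq k) p \<and> is_product k p \<longrightarrow>
                accept_prob n (sq k) Z p W f \<ge> 2/3) \<and>
          (\<forall>p. is_dist (sq k) p \<and> far_from_product k \<gamma> p \<longrightarrow>
                1 - accept_prob n (sq k) Z p W f \<ge> 2/3)"
    using hch hldp hf hprod hfar by blast
qed


end
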